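(* Let $\tau$, $K$, $X$, $Q$, $\mu_0$, $f$, $\omega$, $Z_{N,\beta,h,\omega}$, $A(b,\beta,h)$ and $\lambda(b,\beta,h)$ be as in the context. Then for all $h\in\mathbb{R}$ and $\beta\ge 0$, $$\frac1N\log \mathbb{E}Z_{N,\beta,h,\omega}\xrightarrow[N\to\infty]{} F^a(\beta,h)\ge 0,$$ where $F^a(\beta,h)$ is the (unique) solution $b>0$ of the equation $\lambda(b,\beta,h)=1$ if $\lambda(0,\beta,h)>1$, and $F^a(\beta,h)=0$ otherwise. Moreover the annealed critical point is $$h_c^a(\beta):=\sup\{h\in\mathbb{R}: F^a(\beta,h)=0\}=-\log\lambda(0,\beta,0).$$
   Context: Let $\tau=(\tau_n)_{n\ge0}$ be a discrete renewal process on $\{0,1,2,\dots\}$ with $\tau_0=0$ and i.i.d. interarrival times with law $K(n):=P(\tau_1=n)=L(n)n^{-(1+\alpha)}$ for $n\ge1$, where $\alpha\ge0$ and $L:\mathbb{N}\to(0,\infty)$ is slowly varying; assume $\sum_{n\ge1}K(n)=1$. Write $\delta_n=\mathbf 1_{\{n\in\tau\}}$ where $\{n\in\tau\}=\bigcup_{k\ge0}\{\tau_k=n\}$, and $E$ for expectation w.r.t. the law $P$ of $\tau$. For a real sequence $\omega=(\omega_n)_{n\ge0}$ independent of $\tau$, $\beta\ge0$, $h\in\mathbb{R}$, define the partition function $Z_{N,\beta,h,\omega}=E\big[\exp\big(\sum_{n=1}^N(\beta\omega_n+h)\delta_n\big)\delta_N\big]$. Let $X=(X_n)_{n\ge0}$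 be a homogeneous irreducible Markov chain on a finite state space $\Sigma$ with transition matrix $Q$, started from its invariant distribution $\mu_0$; let $f:\Sigma\to\mathbb{R}$ with $\sum_x\mu_0(x)f(x)=0$, and set $\omega_n=f(X_n)$. $\mathbb{E}$ denotes expectation with respect to the law of $X$. For $t\ge1$ define the $\Sigma\times\Sigma$ matrix $M(t,\beta,h)(x,y)=K(t)Q^t(x,y)e^{\beta f(y)+h}$, and for $b\ge0$, $A(b,\beta,h)=\sum_{t\ge1}M(t,\beta,h)e^{-bt}$ (a matrix with positive entries); $\lambda(b,\beta,h)$ denotes its Perron–Frobenius eigenvalue. *)

theory Defs
  imports Complex_Main "HOL-Library.FuncSet"
begin

definition slowly_varying :: "(nat \<Rightarrow> real) \<Rightarrow> bool" where
  "slowly_varying L \<longleftrightarrow> (\<forall>c::real. c > 0 \<longrightarrow>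
     ((\<lambda>n. L (nat \<lfloor>c * real n\<rfloor>) / L n) \<longlongrightarrow> 1) sequentially)"

fun mpow :: "('x::finite \<Rightarrow> 'x \<Rightarrow> real) \<Rightarrow> nat \<Rightarrow> 'x \<Rightarrow> 'x \<Rightarrow> real" where
  "mpow Q 0 = (\<lambda>x y. if x = y then 1 else 0)"
| "mpow Q (Suc n) = (\<lambda>x y. \<Sum>z\<in>UNIV. mpow Q n x z * Q z y)"

definition stochastic_matrix :: "('x::finite \<Rightarrow> 'x \<Rightarrow> real) \<Rightarrow> bool" where
  "stochastic_matrix Q \<longleftrightarrow> (\<forall>x y. Q x y \<ge> 0) \<and> (\<forall>x. (\<Sum>y\<in>UNIV. Q x y) = 1)"

definition irreducible_matrix :: "('x::finite \<Rightarrow> 'x \<Rightarrow> real) \<Rightarrow> bool" where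
  "irreducible_matrix Q \<longleftrightarrow> (\<forall>x y. \<exists>n. mpow Q n x y > 0)"

definition invariant_distribution :: "('x::finite \<Rightarrow> 'x \<Rightarrow> real) \<Rightarrow> ('x \<Rightarrow> real) \<Rightarrow> bool" where
  "invariant_distribution Q \<mu> \<longleftrightarrow> (\<forall>x. \<mu> x \<ge> 0) \<and> (\<Sum>x\<in>UNIV. \<mu> x) = 1 \<and>
     (\<forall>y. (\<Sum>x\<in>UNIV. \<mu> x * Q x y) = \<mu> y)"

definition prev_pt :: "nat set \<Rightarrow> nat \<Rightarrow> nat" where
  "prev_pt S n = Max (insert 0 {m\<in>S. m < n})"

text \<open>Pinned partition function
  \<open>Z_{N,\<beta>,h,\<omega>} = E[exp(\<Sum>_{n=1}^N (\<beta>\<omega>_n+h)\<delta>_n) \<delta>_N]\<close>, written as a sum over the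
  possible sets S = \<tau> \<inter> {1..N} of renewal points, with
  \<open>P(\<tau> \<inter> {1..N} = S, N \<in> \<tau>) = \<Prod> K(gaps)\<close>.\<close>
definition Zpin :: "(nat \<Rightarrow> real) \<Rightarrow> nat \<Rightarrow> real \<Rightarrow> real \<Rightarrow> (nat \<Rightarrow> real) \<Rightarrow> real" where
  "Zpin K N \<beta> h \<omega> =
     (\<Sum>S\<in>{S. S \<subseteq> {1..N} \<and> (N = 0 \<or> N \<in> S)}.
        (\<Prod>n\<in>S. K (n - prev_pt S n)) * exp (\<Sum>n\<in>S. \<beta> * \<omega> n + h))"

text \<open>Annealed partition function \<open>\<EE> Z_N\<close>, with \<open>\<omega>_n = f(X_n)\<close>, X a Markov chain with
  transition matrix Q started from \<mu>0; the expectation is over the law of \<open>(X_0,\<dots>,X_N)\<close>.\<close>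
definition EZ :: "(nat \<Rightarrow> real) \<Rightarrow> ('x::finite \<Rightarrow> 'x \<Rightarrow> real) \<Rightarrow> ('x \<Rightarrow> real) \<Rightarrow> ('x \<Rightarrow> real)
                   \<Rightarrow> nat \<Rightarrow> real \<Rightarrow> real \<Rightarrow> real" where
  "EZ K Q \<mu> f N \<beta> h =
     (\<Sum>x\<in>PiE {..N} (\<lambda>_. UNIV).
        \<mu> (x 0) * (\<Prod>i\<in>{1..N}. Q (x (i - 1)) (x i)) * Zpin K N \<beta> h (\<lambda>n. f (x n)))"

definition Amat :: "(nat \<Rightarrow> real) \<Rightarrow> ('x::finite \<Rightarrow> 'x \<Rightarrow> real) \<Rightarrow> ('x \<Rightarrow> real)
                     \<Rightarrow> real \<Rightarrow> real \<Rightarrow> real \<Rightarrow> 'x \<Rightarrow> 'x \<Rightarrow> real" where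
  "Amat K Q f b \<beta> h x y =
     (\<Sum>t. K (Suc t) * mpow Q (Suc t) x y * exp (\<beta> * f y + h) * exp (- b * real (Suc t)))"

definition pf_eigenvalue :: "('x::finite \<Rightarrow> 'x \<Rightarrow> real) \<Rightarrow> real" where
  "pf_eigenvalue M = (THE r. \<exists>v. (\<forall>x. v x > 0) \<and> (\<forall>x. (\<Sum>y\<in>UNIV. M x y * v y) = r * v x))"

definition lam :: "(nat \<Rightarrow> real) \<Rightarrow> ('x::finite \<Rightarrow> 'x \<Rightarrow> real) \<Rightarrow> ('x \<Rightarrow> real)
                   \<Rightarrow> real \<Rightarrow> real \<Rightarrow> real \<Rightarrow> real" where
  "lam K Q f b \<beta> h = pf_eigenvalue (Amat K Q f b \<beta> h)"

definition Fa :: "(nat \<Rightarrow> real) \<Rightarrow> ('x::finite \<Rightarrow> 'x \<Rightarrow> real) \<Rightarrow> ('x \<Rightarrow> real)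
                  \<Rightarrow> real \<Rightarrow> real \<Rightarrow> real" where
  "Fa K Q f \<beta> h = (if lam K Q f 0 \<beta> h > 1
                     then (THE b. b > 0 \<and> lam K Q f b \<beta> h = 1) else 0)"

end

theory Submission
  imports Defs "HOL-Analysis.Analysis"
begin

definition Wt :: "('x::finite \<Rightarrow> real) \<Rightarrow> ('x \<Rightarrow> 'x \<Rightarrow> real) \<Rightarrow> nat \<Rightarrow> (nat \<Rightarrow> 'x) \<Rightarrow> real" where
  "Wt \<mu> Q N x = \<mu> (x 0) * (\<Prod>i\<in>{1..N}. Q (x (i - 1)) (x i))"

lemma ext_sum:
  fixes G :: "(nat \<Rightarrow> 'x::finite) \<Rightarrow> real"
  shows "(\<Sum>x\<in>PiE {..Suc N} (\<lambda>_. UNIV). G x) = (\<Sum>x\<in>PiE {..N} (\<lambda>_. UNIV). \<Sum>y\<in>UNIV. G (x(Suc N := y)))"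
proof -
  have e: "{..Suc N} = insert (Suc N) {..N}" by auto
  have "(\<Sum>x\<in>PiE {..Suc N} (\<lambda>_. UNIV). G x) = (\<Sum>x\<in>(\<lambda>(y, g). g(Suc N := y)) ` (UNIV \<times> PiE {..N} (\<lambda>_. UNIV)). G x)"
    unfolding e PiE_insert_eq by simp
  also have "\<dots> = (\<Sum>p\<in>UNIV \<times> PiE {..N} (\<lambda>_. (UNIV::'x set)). G ((\<lambda>(y, g). g(Suc N := y)) p))"
    by (rule sum.reindex[unfolded comp_def]) (rule inj_combinator[where T="\<lambda>_. UNIV", simplified], simp)
  also have "\<dots> = (\<Sum>y\<in>UNIV. \<Sum>x\<in>PiE {..N} (\<lambda>_. UNIV). G (x(Suc N := y)))"
    unfolding sum.cartesian_product by (rule sum.cong) auto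
  also have "\<dots> = (\<Sum>x\<in>PiE {..N} (\<lambda>_. UNIV). \<Sum>y\<in>UNIV. G (x(Suc N := y)))"
    by (rule sum.swap)
  finally show ?thesis .
qed

lemma Wt_upd:
  "Wt \<mu> Q (Suc N) (x(Suc N := y)) = Wt \<mu> Q N x * Q (x N) y"
proof -
  have "(\<Prod>i\<in>{1..Suc N}. Q ((x(Suc N := y)) (i - 1)) ((x(Suc N := y)) i))
      = (\<Prod>i\<in>{1..N}. Q ((x(Suc N := y)) (i - 1)) ((x(Suc N := y)) i)) * Q (x N) y"
    by (subst prod.cl_ivl_Suc) auto
  also have "(\<Prod>i\<in>{1..N}. Q ((x(Suc N := y)) (i - 1)) ((x(Suc N := y)) i)) = (\<Prod>i\<in>{1..N}. Q (x (i - 1)) (x i))"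
    by (rule prod.cong) auto
  finally show ?thesis unfolding Wt_def by simp
qed

lemma marg:
  fixes G :: "(nat \<Rightarrow> 'x::finite) \<Rightarrow> real"
  assumes G: "\<And>x x'. (\<forall>i\<le>m. x i = x' i) \<Longrightarrow> G x = G x'"
  shows "(\<Sum>x\<in>PiE {..m+k} (\<lambda>_. UNIV). Wt \<mu> Q (m+k) x * G x * \<phi> (x (m+k)))
       = (\<Sum>x\<in>PiE {..m} (\<lambda>_. UNIV). Wt \<mu> Q m x * G x * (\<Sum>y\<in>UNIV. mpow Q k (x m) y * \<phi> y))"
proof (induction k arbitrary: \<phi>)
  case 0
  have "(\<Sum>y\<in>UNIV. mpow Q 0 a y * \<phi> y) = (\<Sum>y\<in>UNIV. if a = y then \<phi> y else 0)" for a
    by (rule sum.cong) auto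
  then have "(\<Sum>y\<in>UNIV. mpow Q 0 a y * \<phi> y) = \<phi> a" for a by simp
  then show ?case by simp
next
  case (Suc k)
  have "(\<Sum>x\<in>PiE {..m + Suc k} (\<lambda>_. UNIV). Wt \<mu> Q (m + Suc k) x * G x * \<phi> (x (m + Suc k)))
     = (\<Sum>x\<in>PiE {..m+k} (\<lambda>_. UNIV). \<Sum>y\<in>UNIV. Wt \<mu> Q (Suc (m+k)) (x(Suc (m+k) := y)) * G (x(Suc (m+k) := y)) * \<phi> y)"
    by (simp add: ext_sum)
  also have "\<dots> = (\<Sum>x\<in>PiE {..m+k} (\<lambda>_. UNIV). Wt \<mu> Q (m+k) x * G x * (\<Sum>y\<in>UNIV. Q (x (m+k)) y * \<phi> y))"
  proof (rule sum.cong[OF refl])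
    fix x
    have "G (x(Suc (m+k) := y)) = G x" for y by (rule G) auto
    then show "(\<Sum>y\<in>UNIV. Wt \<mu> Q (Suc (m+k)) (x(Suc (m+k) := y)) * G (x(Suc (m+k) := y)) * \<phi> y) =
      Wt \<mu> Q (m+k) x * G x * (\<Sum>y\<in>UNIV. Q (x (m+k)) y * \<phi> y)"
      by (simp add: Wt_upd sum_distrib_left mult_ac)
  qed
  also have "\<dots> = (\<Sum>x\<in>PiE {..m} (\<lambda>_. UNIV). Wt \<mu> Q m x * G x * (\<Sum>z\<in>UNIV. mpow Q k (x m) z * (\<Sum>y\<in>UNIV. Q z y * \<phi> y)))"
    by (rule Suc.IH)
  also have "\<dots> = (\<Sum>x\<in>PiE {..m} (\<lambda>_. UNIV). Wt \<mu> Q m x * G x * (\<Sum>y\<in>UNIV. mpow Q (Suc k) (x m) y * \<phi> y))"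
  proof (rule sum.cong[OF refl])
    fix x
    have "(\<Sum>z\<in>UNIV. mpow Q k (x m) z * (\<Sum>y\<in>UNIV. Q z y * \<phi> y)) = (\<Sum>y\<in>UNIV. mpow Q (Suc k) (x m) y * \<phi> y)"
    proof -
      have "(\<Sum>z\<in>UNIV. mpow Q k (x m) z * (\<Sum>y\<in>UNIV. Q z y * \<phi> y)) = (\<Sum>z\<in>UNIV. \<Sum>y\<in>UNIV. mpow Q k (x m) z * Q z y * \<phi> y)"
        by (simp add: sum_distrib_left mult.assoc)
      also have "\<dots> = (\<Sum>y\<in>UNIV. \<Sum>z\<in>UNIV. mpow Q k (x m) z * Q z y * \<phi> y)"
        by (rule sum.swap)
      also have "\<dots> = (\<Sum>y\<in>UNIV. mpow Q (Suc k) (x m) y * \<phi> y)"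
        by (simp add: sum_distrib_right)
      finally show ?thesis .
    qed
    then show "Wt \<mu> Q m x * G x * (\<Sum>z\<in>UNIV. mpow Q k (x m) z * (\<Sum>y\<in>UNIV. Q z y * \<phi> y)) =
         Wt \<mu> Q m x * G x * (\<Sum>y\<in>UNIV. mpow Q (Suc k) (x m) y * \<phi> y)" by simp
  qed
  finally show ?case by simp
qed

definition Sets :: "nat \<Rightarrow> nat set set" where
  "Sets N = {S. S \<subseteq> {1..N} \<and> (N = 0 \<or> N \<in> S)}"

lemma finite_Sets: "finite (Sets N)"
  unfolding Sets_def by (rule finite_subset[of _ "Pow {1..N}"]) auto

lemma prev_pt_lt: "0 < N \<Longrightarrow> finite S \<Longrightarrow> prev_pt S N < N"
  unfolding prev_pt_def by (subst Max_less_iff) auto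

lemma prev_pt_insert_Sets:
  assumes "S' \<in> Sets m" "m < N"
  shows "prev_pt (insert N S') N = m"
proof -
  have e: "{k \<in> insert N S'. k < N} = S'" using assms unfolding Sets_def by auto
  have fin: "finite S'" using assms unfolding Sets_def by (auto intro: finite_subset)
  show ?thesis unfolding prev_pt_def e
  proof (rule Max_eqI)
    show "finite (insert 0 S')" using fin by simp
    show "y \<le> m" if "y \<in> insert 0 S'" for y using that assms unfolding Sets_def by auto
    show "m \<in> insert 0 S'" using assms unfolding Sets_def by auto
  qed
qed

lemma prev_pt_insert_other:
  assumes "S' \<subseteq> {1..m}" "m < N" "k \<in> S'"
  shows "prev_pt (insert N S') k = prev_pt S' k"
proof -
  have "{j \<in> insert N S'. j < k} = {j \<in> S'. j < k}" using assms by auto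
  then show ?thesis unfolding prev_pt_def by simp
qed

lemma fiber_Sets:
  assumes "m < N"
  shows "{S \<in> Sets N. prev_pt S N = m} = insert N ` Sets m"
proof (intro equalityI subsetI)
  fix S assume S: "S \<in> {S \<in> Sets N. prev_pt S N = m}"
  then have SN: "S \<subseteq> {1..N}" "N \<in> S" and pm: "prev_pt S N = m" using assms unfolding Sets_def by auto
  have fin: "finite S" using SN by (auto intro: finite_subset)
  define A where "A = {k \<in> S. k < N}"
  have finA: "finite A" using fin unfolding A_def by auto
  have mM: "m = Max (insert 0 A)" using pm unfolding prev_pt_def A_def by simp
  have "S - {N} = A" using SN unfolding A_def by auto
  have sub: "S - {N} \<subseteq> {1..m}"
  proof
    fix k assume k: "k \<in> S - {N}"
    then have "k \<in> A" using \<open>S - {N} = A\<close> by simp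
    then have "k \<le> m" unfolding mM using finA by simp
    then show "k \<in> {1..m}" using k SN by auto
  qed
  have "m = 0 \<or> m \<in> S - {N}"
  proof -
    have "Max (insert 0 A) \<in> insert 0 A" using finA by (intro Max_in) auto
    then show ?thesis unfolding mM[symmetric] \<open>S - {N} = A\<close> by auto
  qed
  then have "S - {N} \<in> Sets m" using sub unfolding Sets_def by auto
  moreover have "S = insert N (S - {N})" using SN by auto
  ultimately show "S \<in> insert N ` Sets m" by blast
next
  fix S assume "S \<in> insert N ` Sets m"
  then obtain S' where S': "S' \<in> Sets m" "S = insert N S'" by auto
  then have "S \<in> Sets N" using assms unfolding Sets_def by auto
  moreover have "prev_pt S N = m" using S' prev_pt_insert_Sets assms by simp
  ultimately show "S \<in> {S \<in> Sets N. prev_pt S N = m}" by simp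
qed

lemma Zpin_Sets:
  "Zpin K N \<beta> h \<omega> = (\<Sum>S\<in>Sets N. (\<Prod>n\<in>S. K (n - prev_pt S n)) * exp (\<Sum>n\<in>S. \<beta> * \<omega> n + h))"
  unfolding Zpin_def Sets_def by simp

lemma Zpin_0: "Zpin K 0 \<beta> h \<omega> = 1"
proof -
  have "Sets 0 = {{}}" unfolding Sets_def by auto
  then show ?thesis unfolding Zpin_Sets by simp
qed

lemma Zpin_rec:
  "Zpin K (Suc n) \<beta> h \<omega> = (\<Sum>m\<le>n. Zpin K m \<beta> h \<omega> * K (Suc n - m) * exp (\<beta> * \<omega> (Suc n) + h))"
proof -
  define N where "N = Suc n"
  define F where "F S = (\<Prod>n\<in>S. K (n - prev_pt S n)) * exp (\<Sum>n\<in>S. \<beta> * \<omega> n + h)" for S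
  have img: "(\<lambda>S. prev_pt S N) ` Sets N \<subseteq> {..n}"
  proof
    fix x assume "x \<in> (\<lambda>S. prev_pt S N) ` Sets N"
    then obtain S where "S \<in> Sets N" "x = prev_pt S N" by auto
    moreover have "finite S" using \<open>S \<in> Sets N\<close> unfolding Sets_def by (auto intro: finite_subset)
    ultimately show "x \<in> {..n}" using prev_pt_lt[of N S] unfolding N_def by auto
  qed
  have "Zpin K N \<beta> h \<omega> = sum F (Sets N)" unfolding Zpin_Sets F_def ..
  also have "\<dots> = (\<Sum>m\<le>n. sum F {S \<in> Sets N. prev_pt S N = m})"
    by (rule sum.group[symmetric]) (use finite_Sets img in auto)
  also have "\<dots> = (\<Sum>m\<le>n. Zpin K m \<beta> h \<omega> * K (N - m) * exp (\<beta> * \<omega> N + h))"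
  proof (rule sum.cong[OF refl])
    fix m assume "m \<in> {..n}"
    then have mN: "m < N" unfolding N_def by auto
    have "sum F {S \<in> Sets N. prev_pt S N = m} = sum F (insert N ` Sets m)"
      using fiber_Sets[OF mN] by simp
    also have "\<dots> = (\<Sum>S\<in>Sets m. F (insert N S))"
    proof (rule sum.reindex[unfolded comp_def])
      show "inj_on (insert N) (Sets m)"
        unfolding inj_on_def Sets_def using mN
        by (metis atLeastAtMost_iff insert_ident linorder_not_le mem_Collect_eq subsetD)
    qed
    also have "\<dots> = (\<Sum>S\<in>Sets m. F S * K (N - m) * exp (\<beta> * \<omega> N + h))"
    proof (rule sum.cong[OF refl])
      fix S assume S: "S \<in> Sets m"
      then have sub: "S \<subseteq> {1..m}" unfolding Sets_def by auto
      have NS: "N \<notin> S" using sub mN by auto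
      have fin: "finite S" using sub by (auto intro: finite_subset)
      have p1: "(\<Prod>k\<in>insert N S. K (k - prev_pt (insert N S) k)) = K (N - m) * (\<Prod>k\<in>S. K (k - prev_pt S k))"
      proof -
        have "(\<Prod>k\<in>insert N S. K (k - prev_pt (insert N S) k)) = K (N - prev_pt (insert N S) N) * (\<Prod>k\<in>S. K (k - prev_pt (insert N S) k))"
          using fin NS by simp
        also have "(\<Prod>k\<in>S. K (k - prev_pt (insert N S) k)) = (\<Prod>k\<in>S. K (k - prev_pt S k))"
          using prev_pt_insert_other[OF sub mN] by (intro prod.cong) auto
        finally show ?thesis using prev_pt_insert_Sets[OF S mN] by simp
      qed
      have p2: "exp (\<Sum>k\<in>insert N S. \<beta> * \<omega> k + h) = exp (\<beta> * \<omega> N + h) * exp (\<Sum>k\<in>S. \<beta> * \<omega> k + h)"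
        using fin NS by (simp add: exp_add)
      show "F (insert N S) = F S * K (N - m) * exp (\<beta> * \<omega> N + h)"
        unfolding F_def p1 p2 by (simp add: mult_ac)
    qed
    also have "\<dots> = Zpin K m \<beta> h \<omega> * K (N - m) * exp (\<beta> * \<omega> N + h)"
      unfolding Zpin_Sets F_def by (simp add: sum_distrib_right)
    finally show "sum F {S \<in> Sets N. prev_pt S N = m} = Zpin K m \<beta> h \<omega> * K (N - m) * exp (\<beta> * \<omega> N + h)" .
  qed
  finally show ?thesis unfolding N_def .
qed

lemma Zpin_local:
  assumes "\<And>i. 1 \<le> i \<Longrightarrow> i \<le> m \<Longrightarrow> \<omega> i = \<omega>' i"
  shows "Zpin K m \<beta> h \<omega> = Zpin K m \<beta> h \<omega>'"
  unfolding Zpin_Sets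
proof (rule sum.cong[OF refl])
  fix S assume "S \<in> Sets m"
  then have "S \<subseteq> {1..m}" unfolding Sets_def by auto
  then have "(\<Sum>n\<in>S. \<beta> * \<omega> n + h) = (\<Sum>n\<in>S. \<beta> * \<omega>' n + h)"
    using assms by (intro sum.cong) auto
  then show "(\<Prod>n\<in>S. K (n - prev_pt S n)) * exp (\<Sum>n\<in>S. \<beta> * \<omega> n + h) =
         (\<Prod>n\<in>S. K (n - prev_pt S n)) * exp (\<Sum>n\<in>S. \<beta> * \<omega>' n + h)" by simp
qed

definition Uv :: "(nat \<Rightarrow> real) \<Rightarrow> ('x::finite \<Rightarrow> 'x \<Rightarrow> real) \<Rightarrow> ('x \<Rightarrow> real) \<Rightarrow> ('x \<Rightarrow> real)
                   \<Rightarrow> real \<Rightarrow> real \<Rightarrow> nat \<Rightarrow> 'x \<Rightarrow> real" where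
  "Uv K Q \<mu> f \<beta> h N y = (\<Sum>x\<in>PiE {..N} (\<lambda>_. UNIV). Wt \<mu> Q N x * Zpin K N \<beta> h (\<lambda>n. f (x n)) * (if x N = y then 1 else 0))"

lemma partition_sum:
  fixes F :: "(nat \<Rightarrow> 'x::finite) \<Rightarrow> real"
  shows "(\<Sum>x\<in>A. F x * g (x m)) = (\<Sum>z\<in>UNIV. g z * (\<Sum>x\<in>A. F x * (if x m = z then 1 else 0)))"
proof -
  have "(\<Sum>x\<in>A. F x * g (x m)) = (\<Sum>x\<in>A. \<Sum>z\<in>UNIV. F x * (if x m = z then 1 else 0) * g z)"
  proof (rule sum.cong[OF refl])
    fix x
    have "(\<Sum>z\<in>UNIV. F x * (if x m = z then 1 else 0) * g z) = (\<Sum>z\<in>UNIV. if x m = z then F x * g z else 0)"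
      by (rule sum.cong) auto
    then show "F x * g (x m) = (\<Sum>z\<in>UNIV. F x * (if x m = z then 1 else 0) * g z)" by simp
  qed
  also have "\<dots> = (\<Sum>z\<in>UNIV. \<Sum>x\<in>A. F x * (if x m = z then 1 else 0) * g z)" by (rule sum.swap)
  also have "\<dots> = (\<Sum>z\<in>UNIV. g z * (\<Sum>x\<in>A. F x * (if x m = z then 1 else 0)))"
    by (simp add: sum_distrib_left mult_ac)
  finally show ?thesis .
qed

lemma EZ_Uv: "EZ K Q \<mu> f N \<beta> h = (\<Sum>y\<in>UNIV. Uv K Q \<mu> f \<beta> h N y)"
proof -
  have "(\<Sum>y\<in>UNIV. Uv K Q \<mu> f \<beta> h N y) = (\<Sum>x\<in>PiE {..N} (\<lambda>_. UNIV). \<Sum>y\<in>UNIV. Wt \<mu> Q N x * Zpin K N \<beta> h (\<lambda>n. f (x n)) * (if x N = y then 1 else 0))"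
    unfolding Uv_def by (rule sum.swap)
  also have "\<dots> = (\<Sum>x\<in>PiE {..N} (\<lambda>_. UNIV). Wt \<mu> Q N x * Zpin K N \<beta> h (\<lambda>n. f (x n)))"
  proof (rule sum.cong[OF refl])
    fix x :: "nat \<Rightarrow> 'a"
    have "(\<Sum>y\<in>UNIV. (if x N = y then 1 else 0)::real) = 1" by simp
    then show "(\<Sum>y\<in>UNIV. Wt \<mu> Q N x * Zpin K N \<beta> h (\<lambda>n. f (x n)) * (if x N = y then 1 else 0)) = Wt \<mu> Q N x * Zpin K N \<beta> h (\<lambda>n. f (x n))"
      by (simp only: sum_distrib_left[symmetric])
  qed
  finally show ?thesis unfolding EZ_def Wt_def by simp
qed

lemma Uv_0: "Uv K Q \<mu> f \<beta> h 0 y = \<mu> y"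
proof -
  have e: "PiE {..0::nat} (\<lambda>_. UNIV) = (\<lambda>z. (\<lambda>_. undefined)(0 := z)) ` (UNIV::'a set)"
  proof -
    have "{..0::nat} = insert 0 {}" by auto
    then have "PiE {..0::nat} (\<lambda>_. UNIV::'a set) = (\<lambda>(y, g). g(0 := y)) ` (UNIV \<times> PiE {} (\<lambda>_. UNIV))"
      by (simp only: PiE_insert_eq)
    also have "\<dots> = (\<lambda>z. (\<lambda>_. undefined)(0 := z)) ` (UNIV::'a set)" by auto
    finally show ?thesis .
  qed
  have inj: "inj_on (\<lambda>z. ((\<lambda>_. undefined)(0 := z)) :: nat \<Rightarrow> 'x) UNIV"
    by (rule inj_onI) (metis fun_upd_same)
  have "Uv K Q \<mu> f \<beta> h 0 y = (\<Sum>z\<in>UNIV. \<mu> z * (if z = y then 1 else 0))"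
    unfolding Uv_def e sum.reindex[OF inj] by (simp add: Wt_def Zpin_0)
  also have "\<dots> = (\<Sum>z\<in>UNIV. if z = y then \<mu> y else 0)" by (rule sum.cong) auto
  finally show ?thesis by simp
qed

lemma Uv_rec:
  fixes Q :: "'x::finite \<Rightarrow> 'x \<Rightarrow> real"
  shows "Uv K Q \<mu> f \<beta> h (Suc n) y =
     (\<Sum>m\<le>n. K (Suc n - m) * (\<Sum>z\<in>UNIV. Uv K Q \<mu> f \<beta> h m z * mpow Q (Suc n - m) z y) * exp (\<beta> * f y + h))"
proof -
  define N where "N = Suc n"
  define P :: "nat \<Rightarrow> (nat \<Rightarrow> 'x) set" where "P m = PiE {..m} (\<lambda>_. UNIV::'x set)" for m
  define \<psi> where "\<psi> w = exp (\<beta> * f w + h) * (if w = y then 1 else 0)" for w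
  have "Uv K Q \<mu> f \<beta> h N y = (\<Sum>x\<in>P N. Wt \<mu> Q N x * (\<Sum>m\<le>n. Zpin K m \<beta> h (\<lambda>k. f (x k)) * K (N - m) * exp (\<beta> * f (x N) + h)) * (if x N = y then 1 else 0))"
    unfolding Uv_def P_def N_def Zpin_rec ..
  also have "\<dots> = (\<Sum>m\<le>n. K (N - m) * (\<Sum>x\<in>P N. Wt \<mu> Q N x * Zpin K m \<beta> h (\<lambda>k. f (x k)) * \<psi> (x N)))"
    unfolding \<psi>_def by (simp add: sum_distrib_left sum_distrib_right mult_ac sum.swap[of _ "P N"])
  also have "\<dots> = (\<Sum>m\<le>n. K (N - m) * (\<Sum>z\<in>UNIV. Uv K Q \<mu> f \<beta> h m z * mpow Q (N - m) z y) * exp (\<beta> * f y + h))"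
  proof (rule sum.cong[OF refl])
    fix m assume "m \<in> {..n}"
    then have mN: "m + (N - m) = N" unfolding N_def by auto
    have G: "Zpin K m \<beta> h (\<lambda>k. f (x k)) = Zpin K m \<beta> h (\<lambda>k. f (x' k))" if "\<forall>i\<le>m. x i = x' i" for x x' :: "nat \<Rightarrow> 'x"
      by (rule Zpin_local) (use that in auto)
    have "(\<Sum>x\<in>P N. Wt \<mu> Q N x * Zpin K m \<beta> h (\<lambda>k. f (x k)) * \<psi> (x N))
        = (\<Sum>x\<in>P m. Wt \<mu> Q m x * Zpin K m \<beta> h (\<lambda>k. f (x k)) * (\<Sum>w\<in>UNIV. mpow Q (N - m) (x m) w * \<psi> w))"
      using marg[where G="\<lambda>x. Zpin K m \<beta> h (\<lambda>k. f (x k))" and m=m and k="N - m" and \<mu>=\<mu> and Q=Q and \<phi>=\<psi>, OF G]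
      unfolding mN P_def by simp
    also have "\<dots> = (\<Sum>x\<in>P m. Wt \<mu> Q m x * Zpin K m \<beta> h (\<lambda>k. f (x k)) * (mpow Q (N - m) (x m) y * exp (\<beta> * f y + h)))"
    proof (rule sum.cong[OF refl])
      fix x
      have "(\<Sum>w\<in>UNIV. mpow Q (N - m) (x m) w * \<psi> w) = (\<Sum>w\<in>UNIV. if w = y then mpow Q (N - m) (x m) y * exp (\<beta> * f y + h) else 0)"
        unfolding \<psi>_def by (rule sum.cong) auto
      then show "Wt \<mu> Q m x * Zpin K m \<beta> h (\<lambda>k. f (x k)) * (\<Sum>w\<in>UNIV. mpow Q (N - m) (x m) w * \<psi> w) =
          Wt \<mu> Q m x * Zpin K m \<beta> h (\<lambda>k. f (x k)) * (mpow Q (N - m) (x m) y * exp (\<beta> * f y + h))" by simp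
    qed
    also have "\<dots> = (\<Sum>z\<in>UNIV. Uv K Q \<mu> f \<beta> h m z * mpow Q (N - m) z y) * exp (\<beta> * f y + h)"
    proof -
      have pe: "(\<Sum>x\<in>P m. Wt \<mu> Q m x * Zpin K m \<beta> h (\<lambda>k. f (x k)) * (mpow Q (N - m) (x m) y * exp (\<beta> * f y + h)))
         = (\<Sum>z\<in>UNIV. (mpow Q (N - m) z y * exp (\<beta> * f y + h)) * (\<Sum>x\<in>P m. Wt \<mu> Q m x * Zpin K m \<beta> h (\<lambda>k. f (x k)) * (if x m = z then 1 else 0)))"
        by (rule partition_sum)
      show ?thesis unfolding pe unfolding Uv_def P_def by (simp add: sum_distrib_right sum_distrib_left mult_ac)
    qed
    finally show "K (N - m) * (\<Sum>x\<in>P N. Wt \<mu> Q N x * Zpin K m \<beta> h (\<lambda>k. f (x k)) * \<psi> (x N)) =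
         K (N - m) * (\<Sum>z\<in>UNIV. Uv K Q \<mu> f \<beta> h m z * mpow Q (N - m) z y) * exp (\<beta> * f y + h)" by simp
  qed
  finally show ?thesis unfolding N_def .
qed

lemma cw_upper:
  fixes M :: "'x::finite \<Rightarrow> 'x \<Rightarrow> real"
  assumes M: "\<And>x y. M x y \<ge> 0"
    and w: "\<And>x. w x > 0" "\<And>x. (\<Sum>y\<in>UNIV. M x y * w y) = r * w x"
    and v: "\<And>x. v x > 0" "\<And>x. (\<Sum>y\<in>UNIV. M x y * v y) \<le> c * v x"
  shows "r \<le> c"
proof -
  define d where "d = Max (range (\<lambda>x. w x / v x))"
  have "d \<in> range (\<lambda>x. w x / v x)" unfolding d_def by (rule Max_in) auto
  then obtain x0 where x0: "d = w x0 / v x0" by auto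
  have le: "w y \<le> d * v y" for y
  proof -
    have "w y / v y \<le> d" unfolding d_def by (rule Max_ge) auto
    then show ?thesis using v(1)[of y] by (simp add: divide_le_eq)
  qed
  have d0: "d \<ge> 0" using x0 w(1)[of x0] v(1)[of x0] by simp
  have "r * w x0 = (\<Sum>y\<in>UNIV. M x0 y * w y)" using w(2) by simp
  also have "\<dots> \<le> (\<Sum>y\<in>UNIV. M x0 y * (d * v y))"
    by (rule sum_mono) (rule mult_left_mono[OF le M])
  also have "\<dots> = d * (\<Sum>y\<in>UNIV. M x0 y * v y)" by (simp add: sum_distrib_left mult_ac)
  also have "\<dots> \<le> d * (c * v x0)" by (rule mult_left_mono[OF v(2) d0])
  also have "\<dots> = c * w x0" using x0 v(1)[of x0] by simp
  finally show ?thesis using w(1)[of x0] by simp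
qed

lemma cw_lower:
  fixes M :: "'x::finite \<Rightarrow> 'x \<Rightarrow> real"
  assumes M: "\<And>x y. M x y \<ge> 0"
    and w: "\<And>x. w x > 0" "\<And>x. (\<Sum>y\<in>UNIV. M x y * w y) = r * w x"
    and v: "\<And>x. v x > 0" "\<And>x. (\<Sum>y\<in>UNIV. M x y * v y) \<ge> c * v x"
  shows "c \<le> r"
proof -
  define d where "d = Min (range (\<lambda>x. w x / v x))"
  have "d \<in> range (\<lambda>x. w x / v x)" unfolding d_def by (rule Min_in) auto
  then obtain x0 where x0: "d = w x0 / v x0" by auto
  have le: "d * v y \<le> w y" for y
  proof -
    have "d \<le> w y / v y" unfolding d_def by (rule Min_le) auto
    then show ?thesis using v(1)[of y] by (simp add: le_divide_eq)
  qed
  have d0: "d \<ge> 0" using x0 w(1)[of x0] v(1)[of x0] by simp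
  have "c * w x0 = d * (c * v x0)" using x0 v(1)[of x0] by simp
  also have "\<dots> \<le> d * (\<Sum>y\<in>UNIV. M x0 y * v y)" by (rule mult_left_mono[OF v(2) d0])
  also have "\<dots> = (\<Sum>y\<in>UNIV. M x0 y * (d * v y))" by (simp add: sum_distrib_left mult_ac)
  also have "\<dots> \<le> (\<Sum>y\<in>UNIV. M x0 y * w y)"
    by (rule sum_mono) (rule mult_left_mono[OF le M])
  also have "\<dots> = r * w x0" using w(2) by simp
  finally show ?thesis using w(1)[of x0] by simp
qed

lemma pf_eq:
  fixes M :: "'x::finite \<Rightarrow> 'x \<Rightarrow> real"
  assumes M: "\<And>x y. M x y \<ge> 0"
    and v: "\<And>x. v x > 0" "\<And>x. (\<Sum>y\<in>UNIV. M x y * v y) = r * v x"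
  shows "pf_eigenvalue M = r"
  unfolding pf_eigenvalue_def
proof (rule the_equality)
  show "\<exists>v. (\<forall>x. 0 < v x) \<and> (\<forall>x. (\<Sum>y\<in>UNIV. M x y * v y) = r * v x)" using v by blast
  fix s assume "\<exists>w. (\<forall>x. 0 < w x) \<and> (\<forall>x. (\<Sum>y\<in>UNIV. M x y * w y) = s * w x)"
  then obtain w where w: "\<And>x. 0 < w x" "\<And>x. (\<Sum>y\<in>UNIV. M x y * w y) = s * w x" by blast
  have "s \<le> r" by (rule cw_upper[where M=M and w=w and r=s and v=v and c=r]) (use M w v in auto)
  moreover have "r \<le> s" by (rule cw_lower[where M=M and w=w and r=s and v=v and c=r]) (use M w v in auto)
  ultimately show "s = r" by simp
qed

lemma pf_exists:
  fixes M :: "'x::finite \<Rightarrow> 'x \<Rightarrow> real"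
  assumes M: "\<And>x y. M x y > 0"
  shows "\<exists>r v. r > 0 \<and> (\<forall>x. v x > 0) \<and> (\<forall>x. (\<Sum>y\<in>UNIV. M x y * v y) = r * v x)"
proof -
  define S where "S = {v::real^'x. (\<forall>i. 0 \<le> v $ i) \<and> (\<Sum>i\<in>UNIV. v $ i) = 1}"
  define s where "s v = (\<Sum>x\<in>UNIV. \<Sum>y\<in>UNIV. M x y * v $ y)" for v :: "real^'x"
  define F where "F v = (\<chi> x. (\<Sum>y\<in>UNIV. M x y * v $ y) / s v)" for v :: "real^'x"
  have rowpos: "(\<Sum>y\<in>UNIV. M x y * v $ y) > 0" if "v \<in> S" for v x
  proof -
    from that have v0: "\<And>i. 0 \<le> v $ i" and v1: "(\<Sum>i\<in>UNIV. v $ i) = 1" unfolding S_def by auto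
    obtain i where "v $ i > 0"
    proof (rule ccontr)
      assume "\<not> thesis"
      then have "\<And>i. v $ i \<le> 0" using that by (meson not_le)
      then have "(\<Sum>i\<in>UNIV. v $ i) \<le> 0" by (simp add: sum_nonpos)
      then show False using v1 by simp
    qed
    then show ?thesis
      by (intro sum_pos2[of UNIV i]) (auto intro: mult_nonneg_nonneg less_imp_le[OF M] v0 mult_pos_pos M)
  qed
  have spos: "s v > 0" if "v \<in> S" for v
    unfolding s_def by (rule sum_pos) (simp_all add: rowpos[OF that])
  have cS: "compact S"
  proof (subst compact_eq_bounded_closed, rule conjI)
    show "bounded S"
    proof -
      have "norm v \<le> 1" if "v \<in> S" for v
      proof -
        have "norm v \<le> (\<Sum>i\<in>UNIV. \<bar>v $ i\<bar>)" by (rule norm_le_l1_cart)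
        also have "\<dots> = (\<Sum>i\<in>UNIV. v $ i)" using that unfolding S_def by simp
        finally show ?thesis using that unfolding S_def by simp
      qed
      then show ?thesis unfolding bounded_iff by blast
    qed
    show "closed S" unfolding S_def
      by (intro closed_Collect_conj closed_Collect_all closed_Collect_le closed_Collect_eq continuous_intros)
  qed
  have cvS: "convex S"
    unfolding convex_def S_def
    by (auto simp: sum.distrib sum_distrib_left[symmetric])
  have neS: "S \<noteq> {}"
  proof -
    have "(\<chi> i. 1 / real CARD('x)) \<in> S" unfolding S_def by simp
    then show ?thesis by blast
  qed
  have contF: "continuous_on S F"
    unfolding F_def s_def
    by (intro continuous_on_vec_lambda continuous_intros) (use spos[unfolded s_def] in force)
  have FS: "F \<in> S \<rightarrow> S"
  proof
    fix v assume v: "v \<in> S"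
    have "(\<Sum>i\<in>UNIV. F v $ i) = (\<Sum>i\<in>UNIV. \<Sum>y\<in>UNIV. M i y * v $ y) / s v"
      unfolding F_def by (simp add: sum_divide_distrib)
    also have "\<dots> = 1" using spos[OF v] unfolding s_def by simp
    finally show "F v \<in> S" unfolding S_def using rowpos[OF v] spos[OF v]
      by (auto simp: F_def less_imp_le)
  qed
  obtain v where v: "v \<in> S" "F v = v" using brouwer[OF cS cvS neS contF FS] by blast
  have eig: "(\<Sum>y\<in>UNIV. M x y * v $ y) = s v * v $ x" for x
  proof -
    have "v $ x = (\<Sum>y\<in>UNIV. M x y * v $ y) / s v" using v(2) unfolding F_def by (metis vec_lambda_beta)
    then show ?thesis using spos[OF v(1)] by (simp add: field_simps)
  qed
  have vpos: "v $ x > 0" for x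
  proof -
    have "v $ x = (\<Sum>y\<in>UNIV. M x y * v $ y) / s v" using v(2) unfolding F_def by (metis vec_lambda_beta)
    then show ?thesis using spos[OF v(1)] rowpos[OF v(1)] by simp
  qed
  show ?thesis
    by (rule exI[of _ "s v"], rule exI[of _ "\<lambda>x. v $ x"]) (use spos[OF v(1)] vpos eig in auto)
qed

lemma mpow_nonneg: "stochastic_matrix Q \<Longrightarrow> mpow Q n x y \<ge> 0"
  by (induction n arbitrary: y) (auto simp: stochastic_matrix_def intro!: sum_nonneg)

lemma mpow_rowsum: "stochastic_matrix Q \<Longrightarrow> (\<Sum>y\<in>UNIV. mpow Q n x y) = 1"
proof (induction n)
  case 0 then show ?case by simp
next
  case (Suc n)
  have "(\<Sum>y\<in>UNIV. mpow Q (Suc n) x y) = (\<Sum>y\<in>UNIV. \<Sum>z\<in>UNIV. mpow Q n x z * Q z y)" by simp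
  also have "\<dots> = (\<Sum>z\<in>UNIV. \<Sum>y\<in>UNIV. mpow Q n x z * Q z y)" by (rule sum.swap)
  also have "\<dots> = (\<Sum>z\<in>UNIV. mpow Q n x z * (\<Sum>y\<in>UNIV. Q z y))"
    by (simp add: sum_distrib_left)
  also have "\<dots> = 1" using Suc by (simp add: stochastic_matrix_def)
  finally show ?case .
qed

lemma mpow_le1: "stochastic_matrix Q \<Longrightarrow> mpow Q n x y \<le> 1"
proof -
  assume Q: "stochastic_matrix Q"
  have "mpow Q n x y \<le> (\<Sum>y\<in>UNIV. mpow Q n x y)"
    by (rule member_le_sum) (auto intro: mpow_nonneg[OF Q])
  then show ?thesis using mpow_rowsum[OF Q] by simp
qed

lemma mpow_add: "mpow Q (m + n) x y = (\<Sum>z\<in>UNIV. mpow Q m x z * mpow Q n z y)"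
proof (induction n arbitrary: y)
  case 0
  have "(\<Sum>z\<in>UNIV. mpow Q m x z * mpow Q 0 z y) = (\<Sum>z\<in>UNIV. if z = y then mpow Q m x y else 0)"
    by (rule sum.cong) auto
  then show ?case by simp
next
  case (Suc n)
  have "mpow Q (m + Suc n) x y = (\<Sum>w\<in>UNIV. (\<Sum>z\<in>UNIV. mpow Q m x z * mpow Q n z w) * Q w y)"
    using Suc by simp
  also have "\<dots> = (\<Sum>w\<in>UNIV. \<Sum>z\<in>UNIV. mpow Q m x z * mpow Q n z w * Q w y)"
    by (simp add: sum_distrib_right)
  also have "\<dots> = (\<Sum>z\<in>UNIV. \<Sum>w\<in>UNIV. mpow Q m x z * mpow Q n z w * Q w y)"
    by (rule sum.swap)
  also have "\<dots> = (\<Sum>z\<in>UNIV. mpow Q m x z * mpow Q (Suc n) z y)"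
    by (simp add: sum_distrib_left mult_ac)
  finally show ?case .
qed

lemma mpow_1: "mpow Q (Suc 0) x y = Q x y"
proof -
  have "(\<Sum>z\<in>UNIV. (if x = z then 1 else 0) * Q z y) = (\<Sum>z\<in>UNIV. if z = x then Q x y else 0)"
    by (rule sum.cong) auto
  then show ?thesis by simp
qed

lemma mpow_pos_exists:
  assumes Q: "stochastic_matrix Q" and irr: "irreducible_matrix Q"
  shows "\<exists>t. mpow Q (Suc t) x y > 0"
proof -
  obtain n where n: "mpow Q n x y > 0" using irr unfolding irreducible_matrix_def by blast
  show ?thesis
  proof (cases n)
    case (Suc t) then show ?thesis using n by blast
  next
    case 0
    then have xy: "x = y" using n by (auto split: if_splits)
    obtain z where z: "Q x z > 0"
    proof (rule ccontr)
      assume "\<not> thesis"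
      then have "\<And>z. Q x z \<le> 0" using that by (meson not_le)
      then have "(\<Sum>z\<in>UNIV. Q x z) \<le> 0" by (simp add: sum_nonpos)
      then show False using Q unfolding stochastic_matrix_def by simp
    qed
    obtain n' where n': "mpow Q n' z x > 0" using irr unfolding irreducible_matrix_def by blast
    have p: "0 < mpow Q (Suc 0) x z * mpow Q n' z x" using z n' by (simp only: mpow_1) (rule mult_pos_pos)
    have "mpow Q (Suc 0) x z * mpow Q n' z x \<le> (\<Sum>w\<in>UNIV. mpow Q (Suc 0) x w * mpow Q n' w x)"
      by (rule member_le_sum) (simp_all add: mult_nonneg_nonneg mpow_nonneg[OF Q] del: mpow.simps)
    also have "\<dots> = mpow Q (Suc 0 + n') x x" by (simp only: mpow_add)
    finally have "mpow Q (Suc n') x x > 0" using p by simp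
    then show ?thesis using xy by blast
  qed
qed

declare mpow.simps(2)[simp del]

locale setting =
  fixes K :: "nat \<Rightarrow> real" and Q :: "'x::finite \<Rightarrow> 'x \<Rightarrow> real" and \<mu> :: "'x \<Rightarrow> real" and f :: "'x \<Rightarrow> real"
  assumes Kpos: "\<And>n. n \<ge> 1 \<Longrightarrow> K n > 0"
    and Ksum: "(\<lambda>n. K (Suc n)) sums 1"
    and Qst: "stochastic_matrix Q" and Qirr: "irreducible_matrix Q"
    and mu: "invariant_distribution Q \<mu>"
begin

lemma Ksummable: "summable (\<lambda>n. K (Suc n))" using Ksum by (rule sums_summable)

lemma K_le1: assumes "n \<ge> 1" shows "K n \<le> 1"
proof -
  obtain m where n: "n = Suc m" using assms by (cases n) auto
  have "sum (\<lambda>n. K (Suc n)) {m} \<le> suminf (\<lambda>n. K (Suc n))"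
    by (rule sum_le_suminf[OF Ksummable]) (auto intro: less_imp_le[OF Kpos])
  then show ?thesis using Ksum n by (simp add: sums_iff)
qed

definition Aterm :: "real \<Rightarrow> real \<Rightarrow> real \<Rightarrow> 'x \<Rightarrow> 'x \<Rightarrow> nat \<Rightarrow> real" where
  "Aterm b \<beta> h z y t = K (Suc t) * mpow Q (Suc t) z y * exp (\<beta> * f y + h) * exp (- b * real (Suc t))"

lemma Amat_Aterm: "Amat K Q f b \<beta> h z y = (\<Sum>t. Aterm b \<beta> h z y t)"
  unfolding Amat_def Aterm_def ..

lemma Aterm_nonneg: "Aterm b \<beta> h z y t \<ge> 0"
  unfolding Aterm_def by (intro mult_nonneg_nonneg) (use Kpos[of "Suc t"] mpow_nonneg[OF Qst] in auto)

lemma Aterm_le: "b \<ge> 0 \<Longrightarrow> Aterm b \<beta> h z y t \<le> K (Suc t) * exp (\<beta> * f y + h)"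
proof -
  assume b: "b \<ge> 0"
  have "mpow Q (Suc t) z y * exp (- b * real (Suc t)) \<le> 1 * 1"
    by (rule mult_mono) (use mpow_le1[OF Qst] mpow_nonneg[OF Qst] b in auto)
  then have "K (Suc t) * exp (\<beta> * f y + h) * (mpow Q (Suc t) z y * exp (- b * real (Suc t))) \<le> K (Suc t) * exp (\<beta> * f y + h) * 1"
    by (intro mult_left_mono) (use Kpos[of "Suc t"] in auto)
  then show ?thesis unfolding Aterm_def by (simp add: mult_ac)
qed

lemma Aterm_summable: "b \<ge> 0 \<Longrightarrow> summable (Aterm b \<beta> h z y)"
  by (rule summable_comparison_test'[where g="\<lambda>t. K (Suc t) * exp (\<beta> * f y + h)"])
     (use Aterm_le Aterm_nonneg summable_mult2[OF Ksummable] in auto)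

lemma Amat_pos: "b \<ge> 0 \<Longrightarrow> Amat K Q f b \<beta> h z y > 0"
proof -
  assume b: "b \<ge> 0"
  obtain t where t: "mpow Q (Suc t) z y > 0" using mpow_pos_exists[OF Qst Qirr] by blast
  have "Aterm b \<beta> h z y t > 0" unfolding Aterm_def using t Kpos[of "Suc t"] by simp
  then show ?thesis unfolding Amat_Aterm
    by (intro suminf_pos2[OF Aterm_summable[OF b]]) (auto intro: Aterm_nonneg)
qed

lemma Amat_nonneg: "b \<ge> 0 \<Longrightarrow> Amat K Q f b \<beta> h z y \<ge> 0"
  using Amat_pos[of b] by (simp add: less_imp_le)

lemma lam_eig:
  assumes b: "b \<ge> 0"
  obtains v where "\<And>x. v x > 0" "\<And>x. (\<Sum>y\<in>UNIV. Amat K Q f b \<beta> h x y * v y) = lam K Q f b \<beta> h * v x"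
    "lam K Q f b \<beta> h > 0"
proof -
  obtain r v where rv: "r > 0" "\<forall>x. v x > 0" "\<forall>x. (\<Sum>y\<in>UNIV. Amat K Q f b \<beta> h x y * v y) = r * v x"
    using pf_exists[of "Amat K Q f b \<beta> h"] Amat_pos[OF b] by blast
  have "lam K Q f b \<beta> h = r" unfolding lam_def
    by (rule pf_eq[where v=v]) (use rv Amat_nonneg[OF b] in auto)
  then show ?thesis using that rv by auto
qed

lemma lam_from_eig:
  assumes b: "b \<ge> 0" and v: "\<And>x. v x > 0" "\<And>x. (\<Sum>y\<in>UNIV. Amat K Q f b \<beta> h x y * v y) = r * v x"
  shows "lam K Q f b \<beta> h = r"
  unfolding lam_def by (rule pf_eq[where v=v]) (use v Amat_nonneg[OF b] in auto)

lemma Amat_mono: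
  assumes "0 \<le> b" "b \<le> b'"
  shows "Amat K Q f b' \<beta> h z y \<le> exp (-(b' - b)) * Amat K Q f b \<beta> h z y"
proof -
  have "Aterm b' \<beta> h z y t \<le> exp (-(b' - b)) * Aterm b \<beta> h z y t" for t
  proof -
    have "exp (- b' * real (Suc t)) = exp (-(b' - b) * real (Suc t)) * exp (- b * real (Suc t))"
      by (simp add: exp_add[symmetric] algebra_simps)
    also have "\<dots> \<le> exp (-(b' - b)) * exp (- b * real (Suc t))"
    proof (rule mult_right_mono)
      have "(b' - b) * 1 \<le> (b' - b) * real (Suc t)" using assms by (intro mult_left_mono) auto
      then show "exp (-(b' - b) * real (Suc t)) \<le> exp (-(b' - b))" by (simp add: algebra_simps)
    qed simp
    finally have "exp (- b' * real (Suc t)) \<le> exp (-(b' - b)) * exp (- b * real (Suc t))" .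
    then have "K (Suc t) * mpow Q (Suc t) z y * exp (\<beta> * f y + h) * exp (- b' * real (Suc t))
       \<le> K (Suc t) * mpow Q (Suc t) z y * exp (\<beta> * f y + h) * (exp (-(b' - b)) * exp (- b * real (Suc t)))"
      by (intro mult_left_mono) (use Kpos[of "Suc t"] mpow_nonneg[OF Qst] in auto)
    then show ?thesis unfolding Aterm_def by (simp add: mult_ac)
  qed
  then have "(\<Sum>t. Aterm b' \<beta> h z y t) \<le> (\<Sum>t. exp (-(b' - b)) * Aterm b \<beta> h z y t)"
    by (intro suminf_le) (use assms Aterm_summable summable_mult in auto)
  also have "\<dots> = exp (-(b' - b)) * (\<Sum>t. Aterm b \<beta> h z y t)"
    by (rule suminf_mult[OF Aterm_summable]) (use assms in auto)
  finally show ?thesis unfolding Amat_Aterm .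
qed

lemma lam_mono:
  assumes "0 \<le> b" "b \<le> b'"
  shows "lam K Q f b' \<beta> h \<le> exp (-(b' - b)) * lam K Q f b \<beta> h"
proof -
  have b': "0 \<le> b'" using assms by simp
  obtain v where v: "\<And>x. v x > 0" "\<And>x. (\<Sum>y\<in>UNIV. Amat K Q f b \<beta> h x y * v y) = lam K Q f b \<beta> h * v x"
    using lam_eig[OF assms(1)] by blast
  obtain w where w: "\<And>x. w x > 0" "\<And>x. (\<Sum>y\<in>UNIV. Amat K Q f b' \<beta> h x y * w y) = lam K Q f b' \<beta> h * w x"
    using lam_eig[OF b'] by blast
  show ?thesis
  proof (rule cw_upper[where M="Amat K Q f b' \<beta> h" and w=w and v=v])
    show "\<And>x y. 0 \<le> Amat K Q f b' \<beta> h x y" using Amat_nonneg[OF b'] .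
    show "\<And>x. 0 < w x" by (rule w)
    show "\<And>x. (\<Sum>y\<in>UNIV. Amat K Q f b' \<beta> h x y * w y) = lam K Q f b' \<beta> h * w x" by (rule w)
    show "\<And>x. 0 < v x" by (rule v)
    fix x
    have "(\<Sum>y\<in>UNIV. Amat K Q f b' \<beta> h x y * v y) \<le> (\<Sum>y\<in>UNIV. exp (-(b' - b)) * Amat K Q f b \<beta> h x y * v y)"
      by (intro sum_mono mult_right_mono Amat_mono assms) (use v(1) in \<open>auto intro: less_imp_le\<close>)
    also have "\<dots> = exp (-(b' - b)) * (\<Sum>y\<in>UNIV. Amat K Q f b \<beta> h x y * v y)"
      by (simp add: sum_distrib_left mult_ac)
    also have "\<dots> = exp (-(b' - b)) * lam K Q f b \<beta> h * v x"
      using v(2)[of x] by simp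
    finally show "(\<Sum>y\<in>UNIV. Amat K Q f b' \<beta> h x y * v y) \<le> exp (-(b' - b)) * lam K Q f b \<beta> h * v x" .
  qed
qed

lemma Amat_scale: "Amat K Q f 0 \<beta> h z y = exp h * Amat K Q f 0 \<beta> 0 z y"
proof -
  have "Aterm 0 \<beta> h z y = (\<lambda>t. exp h * Aterm 0 \<beta> 0 z y t)"
    unfolding Aterm_def by (rule ext) (simp add: exp_add mult_ac)
  then show ?thesis unfolding Amat_Aterm
    by (simp add: suminf_mult[OF Aterm_summable])
qed

lemma lam_scale: "lam K Q f 0 \<beta> h = exp h * lam K Q f 0 \<beta> 0"
proof -
  obtain v where v: "\<And>x. v x > 0" "\<And>x. (\<Sum>y\<in>UNIV. Amat K Q f 0 \<beta> 0 x y * v y) = lam K Q f 0 \<beta> 0 * v x"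
    using lam_eig[of 0] by blast
  show ?thesis
  proof (rule lam_from_eig[OF order_refl v(1)])
    fix x
    show "(\<Sum>y\<in>UNIV. Amat K Q f 0 \<beta> h x y * v y) = exp h * lam K Q f 0 \<beta> 0 * v x"
    proof -
      have "(\<Sum>y\<in>UNIV. Amat K Q f 0 \<beta> h x y * v y) = exp h * (\<Sum>y\<in>UNIV. Amat K Q f 0 \<beta> 0 x y * v y)"
        unfolding Amat_scale[of \<beta> h] by (simp add: sum_distrib_left mult_ac)
      then show ?thesis using v(2)[of x] by simp
    qed
  qed
qed

lemma Amat_cont: "continuous_on {0..} (\<lambda>b. Amat K Q f b \<beta> h z y)"
proof -
  have ul: "uniform_limit {0..} (\<lambda>n b. \<Sum>i<n. Aterm b \<beta> h z y i) (\<lambda>b. suminf (\<lambda>i. Aterm b \<beta> h z y i)) sequentially"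
    by (rule Weierstrass_m_test[where M="\<lambda>t. K (Suc t) * exp (\<beta> * f y + h)"])
       (use Aterm_le Aterm_nonneg summable_mult2[OF Ksummable] in auto)
  have "continuous_on {0..} (\<lambda>b. suminf (\<lambda>i. Aterm b \<beta> h z y i))"
  proof (rule uniform_limit_theorem[OF _ ul])
    show "\<forall>\<^sub>F n in sequentially. continuous_on {0..} (\<lambda>b. \<Sum>i<n. Aterm b \<beta> h z y i)"
      unfolding Aterm_def by (intro always_eventually allI continuous_intros)
  qed simp
  then show ?thesis unfolding Amat_Aterm .
qed

end

lemma eig_close:
  fixes M N :: "'x::finite \<Rightarrow> 'x \<Rightarrow> real"
  assumes M: "\<And>x y. M x y \<ge> 0" and N: "\<And>x y. N x y \<ge> 0"
    and v: "\<And>x. v x > 0" "\<And>x. (\<Sum>y\<in>UNIV. M x y * v y) = r * v x"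
    and w: "\<And>x. w x > 0" "\<And>x. (\<Sum>y\<in>UNIV. N x y * w y) = s * w x"
    and close: "\<And>x y. \<bar>N x y - M x y\<bar> \<le> \<eta>"
  shows "\<bar>s - r\<bar> \<le> \<eta> * (\<Sum>y\<in>UNIV. v y) / Min (range v)"
proof -
  define vm where "vm = Min (range v)"
  have "vm \<in> range v" unfolding vm_def by (rule Min_in) auto
  then have vm0: "vm > 0" using v(1) by auto
  have vmle: "vm \<le> v x" for x unfolding vm_def by (rule Min_le) auto
  define C where "C = (\<Sum>y\<in>UNIV. v y) / vm"
  have eta0: "\<eta> \<ge> 0" using close[of undefined undefined] by simp
  have "(\<Sum>y\<in>UNIV. v y) \<ge> 0" by (rule sum_nonneg) (use v(1) in \<open>auto intro: less_imp_le\<close>)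
  then have C0: "C \<ge> 0" unfolding C_def using vm0 by simp
  have vsle: "(\<Sum>y\<in>UNIV. v y) \<le> C * v x" for x
  proof -
    have "(\<Sum>y\<in>UNIV. v y) = C * vm" unfolding C_def using vm0 by simp
    also have "\<dots> \<le> C * v x" by (rule mult_left_mono[OF vmle C0])
    finally show ?thesis .
  qed
  have cl1: "N x y \<le> M x y + \<eta>" "M x y - \<eta> \<le> N x y" for x y using close[of x y] by (simp_all add: abs_le_iff)
  have up: "(\<Sum>y\<in>UNIV. N x y * v y) \<le> (r + \<eta> * C) * v x" for x
  proof -
    have "(\<Sum>y\<in>UNIV. N x y * v y) \<le> (\<Sum>y\<in>UNIV. (M x y + \<eta>) * v y)"
      by (intro sum_mono mult_right_mono) (use cl1 v(1) in \<open>auto intro: less_imp_le\<close>)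
    also have "\<dots> = r * v x + \<eta> * (\<Sum>y\<in>UNIV. v y)"
      using v(2)[of x] by (simp add: algebra_simps sum.distrib sum_distrib_left)
    also have "\<dots> \<le> r * v x + \<eta> * (C * v x)" by (intro add_left_mono mult_left_mono vsle eta0)
    finally show ?thesis by (simp add: algebra_simps)
  qed
  have lo: "(r - \<eta> * C) * v x \<le> (\<Sum>y\<in>UNIV. N x y * v y)" for x
  proof -
    have "(r - \<eta> * C) * v x = r * v x - \<eta> * (C * v x)" by (simp add: algebra_simps)
    also have "\<dots> \<le> r * v x - \<eta> * (\<Sum>y\<in>UNIV. v y)" by (intro diff_left_mono mult_left_mono vsle eta0)
    also have "\<dots> = (\<Sum>y\<in>UNIV. (M x y - \<eta>) * v y)"
      using v(2)[of x] by (simp add: algebra_simps sum_subtractf sum_distrib_left)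
    also have "\<dots> \<le> (\<Sum>y\<in>UNIV. N x y * v y)"
      by (intro sum_mono mult_right_mono) (use cl1 v(1) in \<open>auto intro: less_imp_le\<close>)
    finally show ?thesis .
  qed
  have "s \<le> r + \<eta> * C" by (rule cw_upper[where M=N and w=w and v=v]) (use N w v up in auto)
  moreover have "r - \<eta> * C \<le> s" by (rule cw_lower[where M=N and w=w and v=v]) (use N w v lo in auto)
  ultimately show ?thesis unfolding C_def vm_def by (simp add: abs_le_iff)
qed

context setting begin

lemma lam_cont: "continuous_on {0..} (\<lambda>b. lam K Q f b \<beta> h)"
  unfolding continuous_on
proof
  fix b0 :: real assume b0: "b0 \<in> {0..}"
  obtain v where v: "\<And>x. v x > 0" "\<And>x. (\<Sum>y\<in>UNIV. Amat K Q f b0 \<beta> h x y * v y) = lam K Q f b0 \<beta> h * v x"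
    using lam_eig[of b0 \<beta> h] b0 by (metis atLeast_iff)
  define C where "C = (\<Sum>y\<in>UNIV. v y) / Min (range v)"
  have "Min (range v) \<in> range v" by (rule Min_in) auto
  then have C0: "C > 0" unfolding C_def using v(1) by (auto intro!: divide_pos_pos sum_pos)
  show "((\<lambda>b. lam K Q f b \<beta> h) \<longlongrightarrow> lam K Q f b0 \<beta> h) (at b0 within {0..})"
    unfolding tendsto_iff
  proof (intro allI impI)
    fix e :: real assume e: "e > 0"
    define \<eta> where "\<eta> = e / (2 * C)"
    have eta: "\<eta> > 0" unfolding \<eta>_def using e C0 by simp
    have ev1: "\<forall>\<^sub>F b in at b0 within {0..}. \<forall>x y. dist (Amat K Q f b \<beta> h x y) (Amat K Q f b0 \<beta> h x y) < \<eta>"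
    proof (intro eventually_all_finite)
      fix x y
      have "((\<lambda>b. Amat K Q f b \<beta> h x y) \<longlongrightarrow> Amat K Q f b0 \<beta> h x y) (at b0 within {0..})"
        using Amat_cont[of \<beta> h x y] b0 unfolding continuous_on by blast
      then show "\<forall>\<^sub>F b in at b0 within {0..}. dist (Amat K Q f b \<beta> h x y) (Amat K Q f b0 \<beta> h x y) < \<eta>"
        unfolding tendsto_iff using eta by blast
    qed
    have ev2: "\<forall>\<^sub>F b in at b0 within {0..}. b \<in> {0..}"
      by (auto simp: eventually_at_filter)
    show "\<forall>\<^sub>F b in at b0 within {0..}. dist (lam K Q f b \<beta> h) (lam K Q f b0 \<beta> h) < e"
      using ev1 ev2
    proof eventually_elim
      case (elim b)
      then have b: "b \<ge> 0" by simp
      obtain w where w: "\<And>x. w x > 0" "\<And>x. (\<Sum>y\<in>UNIV. Amat K Q f b \<beta> h x y * w y) = lam K Q f b \<beta> h * w x"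
        using lam_eig[OF b] by blast
      have "\<bar>lam K Q f b \<beta> h - lam K Q f b0 \<beta> h\<bar> \<le> \<eta> * C"
        unfolding C_def times_divide_eq_right
      proof (rule eig_close[where M="Amat K Q f b0 \<beta> h" and N="Amat K Q f b \<beta> h" and v=v and w=w])
        show "\<And>x y. 0 \<le> Amat K Q f b0 \<beta> h x y" using Amat_nonneg b0 by auto
        show "\<And>x y. 0 \<le> Amat K Q f b \<beta> h x y" using Amat_nonneg b by auto
        show "\<And>x y. \<bar>Amat K Q f b \<beta> h x y - Amat K Q f b0 \<beta> h x y\<bar> \<le> \<eta>"
          using elim(1) by (auto simp: dist_real_def intro: less_imp_le)
      qed (use v w in auto)
      also have "\<dots> < e" unfolding \<eta>_def using C0 e by simp
      finally show ?case by (simp add: dist_real_def)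
    qed
  qed
qed

lemma root_exists:
  assumes L: "lam K Q f 0 \<beta> h > 1"
  shows "\<exists>!b. b > 0 \<and> lam K Q f b \<beta> h = 1"
proof -
  define B where "B = ln (lam K Q f 0 \<beta> h) + 1"
  have B0: "B \<ge> 0" unfolding B_def using L by simp
  have "lam K Q f B \<beta> h \<le> exp (-(B - 0)) * lam K Q f 0 \<beta> h" by (rule lam_mono) (use B0 in auto)
  also have "\<dots> = exp (-1)" unfolding B_def using L by (simp add: exp_diff exp_minus field_simps)
  also have "\<dots> \<le> 1" by simp
  finally have LB: "lam K Q f B \<beta> h \<le> 1" .
  have cont: "continuous_on {0..B} (\<lambda>b. lam K Q f b \<beta> h)"
    by (rule continuous_on_subset[OF lam_cont]) auto
  obtain b where b: "0 \<le> b" "b \<le> B" "lam K Q f b \<beta> h = 1"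
    using IVT2'[where f="\<lambda>b. lam K Q f b \<beta> h" and a=0 and b=B and y=1, OF LB _ B0 cont] L by auto
  have bpos: "b > 0" using b L by (cases "b = 0") auto
  show ?thesis
  proof (rule ex1I[of _ b])
    show "b > 0 \<and> lam K Q f b \<beta> h = 1" using bpos b by simp
    fix b' assume b': "b' > 0 \<and> lam K Q f b' \<beta> h = 1"
    have strict: "lam K Q f c2 \<beta> h < lam K Q f c1 \<beta> h" if c: "0 \<le> c1" "c1 < c2" for c1 c2
    proof -
      have "lam K Q f c1 \<beta> h > 0" using lam_eig[of c1 \<beta> h] c(1) by auto
      moreover have "lam K Q f c2 \<beta> h \<le> exp (-(c2 - c1)) * lam K Q f c1 \<beta> h"
        by (rule lam_mono) (use c in auto)
      moreover have "exp (-(c2 - c1)) < 1" using c by simp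
      ultimately show ?thesis by (smt (verit) mult_less_cancel_right2)
    qed
    show "b' = b"
    proof (rule ccontr)
      assume "b' \<noteq> b"
      then have "b' < b \<or> b < b'" by auto
      then show False using strict[of b' b] strict[of b b'] b b' by auto
    qed
  qed
qed

lemma Fa_pos:
  assumes L: "lam K Q f 0 \<beta> h > 1"
  shows "Fa K Q f \<beta> h > 0" "lam K Q f (Fa K Q f \<beta> h) \<beta> h = 1"
proof -
  have "Fa K Q f \<beta> h = (THE b. b > 0 \<and> lam K Q f b \<beta> h = 1)" unfolding Fa_def using L by simp
  moreover have "(THE b. b > 0 \<and> lam K Q f b \<beta> h = 1) > 0 \<and> lam K Q f (THE b. b > 0 \<and> lam K Q f b \<beta> h = 1) \<beta> h = 1"
    by (rule theI'[OF root_exists[OF L]])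
  ultimately show "Fa K Q f \<beta> h > 0" "lam K Q f (Fa K Q f \<beta> h) \<beta> h = 1" by auto
qed

lemma Fa_zero_iff: "Fa K Q f \<beta> h = 0 \<longleftrightarrow> \<not> lam K Q f 0 \<beta> h > 1"
  using Fa_pos[of \<beta> h] unfolding Fa_def by auto

lemma Sup_claim: "Sup {h. Fa K Q f \<beta> h = 0} = - ln (lam K Q f 0 \<beta> 0)"
proof -
  obtain v where L0: "lam K Q f 0 \<beta> 0 > 0" using lam_eig[of 0 \<beta> 0] by auto
  have "{h. Fa K Q f \<beta> h = 0} = {..- ln (lam K Q f 0 \<beta> 0)}"
  proof (intro set_eqI)
    fix h
    have "Fa K Q f \<beta> h = 0 \<longleftrightarrow> exp h * lam K Q f 0 \<beta> 0 \<le> 1"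
      unfolding Fa_zero_iff lam_scale[of \<beta> h] by auto
    also have "\<dots> \<longleftrightarrow> ln (exp h * lam K Q f 0 \<beta> 0) \<le> 0" using L0 by simp
    also have "\<dots> \<longleftrightarrow> h \<le> - ln (lam K Q f 0 \<beta> 0)" using L0 by (simp add: ln_mult) (smt (verit))
    finally show "h \<in> {h. Fa K Q f \<beta> h = 0} \<longleftrightarrow> h \<in> {..- ln (lam K Q f 0 \<beta> 0)}" by simp
  qed
  then show ?thesis by simp
qed

end

lemma half_floor: "nat \<lfloor>1 / 2 * real n\<rfloor> = n div 2"
proof -
  have "\<lfloor>real n / real (2::nat)\<rfloor> = int (n div 2)" by (rule floor_divide_of_nat_eq)
  then show ?thesis by simp
qed

lemma L_lower:
  fixes L :: "nat \<Rightarrow> real"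
  assumes Lpos: "\<forall>n. L n > 0" and Lsv: "slowly_varying L"
  shows "\<exists>a>0. \<forall>n\<ge>1. L n \<ge> a / real n"
proof -
  have "((\<lambda>n. L (nat \<lfloor>1/2 * real n\<rfloor>) / L n) \<longlongrightarrow> 1) sequentially"
  proof -
    have "(1/2::real) > 0" by simp
    then show ?thesis using Lsv unfolding slowly_varying_def by blast
  qed
  then have "((\<lambda>n. L (n div 2) / L n) \<longlongrightarrow> 1) sequentially" unfolding half_floor .
  then have "eventually (\<lambda>n. dist (L (n div 2) / L n) 1 < 1) sequentially"
    unfolding tendsto_iff by simp
  then obtain N0 where N0: "\<And>n. n \<ge> N0 \<Longrightarrow> dist (L (n div 2) / L n) 1 < 1"
    unfolding eventually_sequentially by blast
  have rat: "L (n div 2) \<le> 2 * L n" if "n \<ge> N0" for n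
  proof -
    have "L (n div 2) / L n < 2" using N0[OF that] by (simp add: dist_real_def abs_less_iff)
    then show ?thesis using Lpos[rule_format, of n] by (simp add: divide_less_eq)
  qed
  define N1 where "N1 = max N0 2"
  define a where "a = Min ((\<lambda>k. real k * L k) ` {1..N1})"
  have "a \<in> (\<lambda>k. real k * L k) ` {1..N1}" unfolding a_def
    by (rule Min_in) (auto simp: N1_def)
  then have a0: "a > 0" using Lpos by auto
  have ale: "a \<le> real k * L k" if "k \<in> {1..N1}" for k unfolding a_def
    by (rule Min_le) (use that in auto)
  have main: "n \<ge> 1 \<longrightarrow> L n \<ge> a / real n" for n
  proof (induction n rule: less_induct)
    case (less n)
    show ?case
    proof
      assume n1: "n \<ge> 1"
      show "L n \<ge> a / real n"
      proof (cases "n \<le> N1")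
        case True
        then have "a \<le> real n * L n" using ale n1 by auto
        then show ?thesis using n1 by (simp add: divide_le_eq mult.commute)
      next
        case False
        then have nN: "n \<ge> N0" "n \<ge> 2" unfolding N1_def by auto
        have h1: "n div 2 \<ge> 1" "n div 2 < n" using nN by auto
        have IH: "L (n div 2) \<ge> a / real (n div 2)" using less.IH[OF h1(2)] h1(1) by auto
        have "2 * (n div 2) \<le> n" by simp
        then have "real (2 * (n div 2)) \<le> real n" by (simp only: of_nat_le_iff)
        then have "a / real n \<le> a / (2 * real (n div 2))"
          using a0 h1 by (intro divide_left_mono) auto
        also have "\<dots> = (a / real (n div 2)) / 2" by simp
        also have "\<dots> \<le> L (n div 2) / 2" using IH by simp
        also have "\<dots> \<le> L n" using rat[OF nN(1)] by simp
        finally show ?thesis .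
      qed
    qed
  qed
  show ?thesis using a0 main by blast
qed

context setting begin

lemma Kpos': "m \<le> n \<Longrightarrow> K (Suc n - m) > 0" by (rule Kpos) simp

lemma mu_nonneg: "\<mu> y \<ge> 0" using mu unfolding invariant_distribution_def by auto
lemma mu_sum: "(\<Sum>y\<in>UNIV. \<mu> y) = 1" using mu unfolding invariant_distribution_def by auto

lemma U_nonneg: "Uv K Q \<mu> f \<beta> h N y \<ge> 0"
proof (induction N arbitrary: y rule: less_induct)
  case (less N)
  show ?case
  proof (cases N)
    case 0 then show ?thesis by (simp add: Uv_0 mu_nonneg)
  next
    case (Suc n)
    show ?thesis unfolding Suc Uv_rec
    proof (rule sum_nonneg, intro mult_nonneg_nonneg)
      fix m assume m: "m \<in> {..n}"
      show "0 \<le> K (Suc n - m)" using Kpos'[of m n] m by auto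
      show "0 \<le> (\<Sum>z\<in>UNIV. Uv K Q \<mu> f \<beta> h m z * mpow Q (Suc n - m) z y)"
        using less.IH[of m] m Suc by (intro sum_nonneg mult_nonneg_nonneg mpow_nonneg[OF Qst]) auto
    qed simp
  qed
qed

definition Elo :: "real \<Rightarrow> real \<Rightarrow> real" where "Elo \<beta> h = Min (range (\<lambda>y. exp (\<beta> * f y + h)))"
definition Ehi :: "real \<Rightarrow> real \<Rightarrow> real" where "Ehi \<beta> h = Max (range (\<lambda>y. exp (\<beta> * f y + h)))"

lemma Elo_pos: "Elo \<beta> h > 0"
proof -
  have "Elo \<beta> h \<in> range (\<lambda>y. exp (\<beta> * f y + h))" unfolding Elo_def by (rule Min_in) auto
  then show ?thesis by auto
qed

lemma Elo_le: "Elo \<beta> h \<le> exp (\<beta> * f y + h)" unfolding Elo_def by (rule Min_le) auto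
lemma Ehi_ge: "exp (\<beta> * f y + h) \<le> Ehi \<beta> h" unfolding Ehi_def by (rule Max_ge) auto

lemma EZ_step:
  assumes "m < N"
  shows "EZ K Q \<mu> f N \<beta> h \<ge> K (N - m) * Elo \<beta> h * EZ K Q \<mu> f m \<beta> h"
proof -
  obtain n where N: "N = Suc n" using assms by (cases N) auto
  have mn: "m \<in> {..n}" using assms N by auto
  have Kp: "K (N - m) > 0" using Kpos[of "N - m"] assms by auto
  have each: "Uv K Q \<mu> f \<beta> h N y \<ge> K (N - m) * Elo \<beta> h * (\<Sum>z\<in>UNIV. Uv K Q \<mu> f \<beta> h m z * mpow Q (N - m) z y)" for y
  proof -
    have S0: "(\<Sum>z\<in>UNIV. Uv K Q \<mu> f \<beta> h m z * mpow Q (N - m) z y) \<ge> 0"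
      by (intro sum_nonneg mult_nonneg_nonneg U_nonneg mpow_nonneg[OF Qst])
    have "K (N - m) * Elo \<beta> h * (\<Sum>z\<in>UNIV. Uv K Q \<mu> f \<beta> h m z * mpow Q (N - m) z y)
        \<le> K (N - m) * (\<Sum>z\<in>UNIV. Uv K Q \<mu> f \<beta> h m z * mpow Q (N - m) z y) * exp (\<beta> * f y + h)"
      using Elo_le[of \<beta> h y] Kp S0 by (simp add: mult_left_mono mult_right_mono mult_ac)
    also have "\<dots> \<le> (\<Sum>m'\<le>n. K (Suc n - m') * (\<Sum>z\<in>UNIV. Uv K Q \<mu> f \<beta> h m' z * mpow Q (Suc n - m') z y) * exp (\<beta> * f y + h))"
      unfolding N
    proof (rule member_le_sum[OF mn _ finite_atMost, where f="\<lambda>m'. K (Suc n - m') * (\<Sum>z\<in>UNIV. Uv K Q \<mu> f \<beta> h m' z * mpow Q (Suc n - m') z y) * exp (\<beta> * f y + h)"])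
      fix m' assume m': "m' \<in> {..n} - {m}"
      show "0 \<le> K (Suc n - m') * (\<Sum>z\<in>UNIV. Uv K Q \<mu> f \<beta> h m' z * mpow Q (Suc n - m') z y) * exp (\<beta> * f y + h)"
        using Kpos'[of m' n] m'
        by (intro mult_nonneg_nonneg sum_nonneg U_nonneg mpow_nonneg[OF Qst]) auto
    qed
    also have "\<dots> = Uv K Q \<mu> f \<beta> h N y" unfolding N Uv_rec ..
    finally show ?thesis .
  qed
  have "K (N - m) * Elo \<beta> h * EZ K Q \<mu> f m \<beta> h = (\<Sum>y\<in>UNIV. K (N - m) * Elo \<beta> h * (\<Sum>z\<in>UNIV. Uv K Q \<mu> f \<beta> h m z * mpow Q (N - m) z y))"
  proof -
    have "(\<Sum>y\<in>UNIV. \<Sum>z\<in>UNIV. Uv K Q \<mu> f \<beta> h m z * mpow Q (N - m) z y) = (\<Sum>z\<in>UNIV. \<Sum>y\<in>UNIV. Uv K Q \<mu> f \<beta> h m z * mpow Q (N - m) z y)"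
      by (rule sum.swap)
    also have "\<dots> = (\<Sum>z\<in>UNIV. Uv K Q \<mu> f \<beta> h m z)"
      by (simp add: sum_distrib_left[symmetric] mpow_rowsum[OF Qst])
    finally have e: "(\<Sum>y\<in>UNIV. \<Sum>z\<in>UNIV. Uv K Q \<mu> f \<beta> h m z * mpow Q (N - m) z y) = (\<Sum>z\<in>UNIV. Uv K Q \<mu> f \<beta> h m z)" .
    show ?thesis unfolding EZ_Uv sum_distrib_left[symmetric] e ..
  qed
  also have "\<dots> \<le> EZ K Q \<mu> f N \<beta> h" unfolding EZ_Uv[of K Q \<mu> f N] by (rule sum_mono[OF each])
  finally show ?thesis .
qed

lemma EZ_0: "EZ K Q \<mu> f 0 \<beta> h = 1"
  unfolding EZ_Uv Uv_0 by (rule mu_sum)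

lemma EZ_pos: "EZ K Q \<mu> f N \<beta> h > 0"
proof (cases N)
  case 0 then show ?thesis by (simp add: EZ_0)
next
  case (Suc n)
  have "0 < K (N - 0) * Elo \<beta> h * EZ K Q \<mu> f 0 \<beta> h"
    using Kpos[of N] Suc Elo_pos[of \<beta> h] by (simp add: EZ_0)
  also have "\<dots> \<le> EZ K Q \<mu> f N \<beta> h" by (rule EZ_step) (simp add: Suc)
  finally show ?thesis .
qed

lemma EZ_lowK: "N \<ge> 1 \<Longrightarrow> EZ K Q \<mu> f N \<beta> h \<ge> K N * Elo \<beta> h"
  using EZ_step[of 0 N \<beta> h] by (simp add: EZ_0)

end

locale eigsetting = setting K Q \<mu> f for K :: "nat \<Rightarrow> real" and Q :: "'x::finite \<Rightarrow> 'x \<Rightarrow> real" and \<mu> f +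
  fixes \<beta> h b :: real and v :: "'x \<Rightarrow> real"
  assumes b0: "b \<ge> 0" and vpos: "\<And>x. v x > 0"
    and veig: "\<And>x. (\<Sum>y\<in>UNIV. Amat K Q f b \<beta> h x y * v y) = lam K Q f b \<beta> h * v x"
begin

definition w :: "nat \<Rightarrow> 'x \<Rightarrow> real" where "w m z = Uv K Q \<mu> f \<beta> h m z * exp (- b * real m)"
definition Bv :: "nat \<Rightarrow> 'x \<Rightarrow> real" where
  "Bv t z = (\<Sum>y\<in>UNIV. K t * mpow Q t z y * exp (\<beta> * f y + h) * exp (- b * real t) * v y)"
definition C :: "nat \<Rightarrow> 'x \<Rightarrow> real" where "C k z = (\<Sum>j. Bv (k + j) z)"
definition Phi :: "nat \<Rightarrow> real" where "Phi N = (\<Sum>m<N. \<Sum>z\<in>UNIV. w m z * C (N - m) z)"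
definition Vs :: real where "Vs = (\<Sum>y\<in>UNIV. v y)"
definition muv :: real where "muv = (\<Sum>z\<in>UNIV. \<mu> z * v z)"

lemma w_nonneg: "w m z \<ge> 0" unfolding w_def using U_nonneg by simp

lemma Bv_nonneg: "t \<ge> 1 \<Longrightarrow> Bv t z \<ge> 0"
  unfolding Bv_def using Kpos[of t] vpos mpow_nonneg[OF Qst]
  by (intro sum_nonneg mult_nonneg_nonneg) (auto intro: less_imp_le)

lemma Bv_le: assumes t: "t \<ge> 1" shows "Bv t z \<le> K t * (Ehi \<beta> h * Vs)"
proof -
  have "Bv t z \<le> (\<Sum>y\<in>UNIV. K t * Ehi \<beta> h * v y)"
    unfolding Bv_def
  proof (rule sum_mono)
    fix y
    have Kt: "K t \<ge> 0" using Kpos[OF t] by simp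
    have E0: "0 \<le> Ehi \<beta> h" using Ehi_ge[where \<beta>=\<beta> and h=h and y=y] exp_gt_zero[of "\<beta> * f y + h"] by linarith
    have "mpow Q t z y * exp (\<beta> * f y + h) * exp (- b * real t) \<le> 1 * Ehi \<beta> h * 1"
      using mpow_le1[OF Qst] mpow_nonneg[OF Qst] Ehi_ge[where \<beta>=\<beta> and h=h and y=y] b0 E0
      by (intro mult_mono) auto
    then have "K t * (mpow Q t z y * exp (\<beta> * f y + h) * exp (- b * real t)) * v y \<le> K t * (1 * Ehi \<beta> h * 1) * v y"
      using Kt vpos[of y] by (intro mult_right_mono mult_left_mono) auto
    then show "K t * mpow Q t z y * exp (\<beta> * f y + h) * exp (- b * real t) * v y \<le> K t * Ehi \<beta> h * v y"
      by (simp add: mult_ac)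
  qed
  also have "\<dots> = K t * (Ehi \<beta> h * Vs)" unfolding Vs_def by (simp add: sum_distrib_left sum_distrib_right mult_ac)
  finally show ?thesis .
qed

lemma Bv_summable: assumes k: "k \<ge> 1" shows "summable (\<lambda>j. Bv (k + j) z)"
proof -
  have s: "summable (\<lambda>j. K (Suc (j + (k - 1))))"
    using summable_ignore_initial_segment[OF Ksummable, of "k - 1"] by simp
  have e: "Suc (j + (k - 1)) = k + j" for j using k by simp
  have s2: "summable (\<lambda>j. K (k + j) * (Ehi \<beta> h * Vs))"
    using summable_mult2[OF s, of "Ehi \<beta> h * Vs"] unfolding e .
  show ?thesis
    by (rule summable_comparison_test'[OF s2]) (use Bv_nonneg Bv_le k in auto)
qed

lemma C_nonneg: "k \<ge> 1 \<Longrightarrow> C k z \<ge> 0"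
  unfolding C_def by (intro suminf_nonneg Bv_summable) (auto intro: Bv_nonneg)

lemma C_step: assumes k: "k \<ge> 1" shows "C k z = Bv k z + C (Suc k) z"
proof -
  have "(\<Sum>j. Bv (k + Suc j) z) = (\<Sum>j. Bv (k + j) z) - Bv (k + 0) z"
    by (rule suminf_split_head[OF Bv_summable[OF k]])
  then show ?thesis unfolding C_def by simp
qed

lemma C_1: "C 1 z = lam K Q f b \<beta> h * v z"
proof -
  have e: "Bv (1 + j) z = (\<Sum>y\<in>UNIV. Aterm b \<beta> h z y j * v y)" for j
    unfolding Bv_def Aterm_def by simp
  have "C 1 z = (\<Sum>j. \<Sum>y\<in>UNIV. Aterm b \<beta> h z y j * v y)" unfolding C_def e ..
  also have "\<dots> = (\<Sum>y\<in>UNIV. \<Sum>j. Aterm b \<beta> h z y j * v y)"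
    by (rule suminf_sum) (intro summable_mult2 Aterm_summable b0)
  also have "\<dots> = (\<Sum>y\<in>UNIV. Amat K Q f b \<beta> h z y * v y)"
    unfolding Amat_Aterm by (intro sum.cong refl suminf_mult2[symmetric] Aterm_summable b0)
  also have "\<dots> = lam K Q f b \<beta> h * v z" by (rule veig)
  finally show ?thesis .
qed

lemma C_Suc0: "C (Suc 0) z = lam K Q f b \<beta> h * v z" using C_1 by simp

lemma exp_split: "m \<le> N \<Longrightarrow> exp (- b * real N) = exp (- b * real m) * exp (- b * real (N - m))"
  by (simp add: exp_add[symmetric] of_nat_diff algebra_simps)

lemma w_rec:
  assumes N: "N \<ge> 1"
  shows "(\<Sum>y\<in>UNIV. w N y * v y) = (\<Sum>m<N. \<Sum>z\<in>UNIV. w m z * Bv (N - m) z)"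
proof -
  obtain n where n: "N = Suc n" using N by (cases N) auto
  define T where "T m z y = w m z * (K (N - m) * mpow Q (N - m) z y * exp (\<beta> * f y + h) * exp (- b * real (N - m)) * v y)" for m z y
  have "(\<Sum>y\<in>UNIV. w N y * v y) = (\<Sum>y\<in>UNIV. \<Sum>m<N. \<Sum>z\<in>UNIV. T m z y)"
  proof (rule sum.cong[OF refl])
    fix y
    have "w N y * v y = (\<Sum>m<N. K (N - m) * (\<Sum>z\<in>UNIV. Uv K Q \<mu> f \<beta> h m z * mpow Q (N - m) z y) * exp (\<beta> * f y + h)) * exp (- b * real N) * v y"
      unfolding w_def n Uv_rec lessThan_Suc_atMost ..
    also have "\<dots> = (\<Sum>m<N. \<Sum>z\<in>UNIV. T m z y)"
      unfolding sum_distrib_right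
    proof (rule sum.cong[OF refl])
      fix m assume "m \<in> {..<N}"
      then have mN: "m \<le> N" by simp
      show "K (N - m) * (\<Sum>z\<in>UNIV. Uv K Q \<mu> f \<beta> h m z * mpow Q (N - m) z y) * exp (\<beta> * f y + h) * exp (- b * real N) * v y
          = (\<Sum>z\<in>UNIV. T m z y)"
        unfolding T_def w_def exp_split[OF mN] by (simp add: sum_distrib_left sum_distrib_right mult_ac)
    qed
    finally show "w N y * v y = (\<Sum>m<N. \<Sum>z\<in>UNIV. T m z y)" .
  qed
  also have "\<dots> = (\<Sum>m<N. \<Sum>y\<in>UNIV. \<Sum>z\<in>UNIV. T m z y)" by (rule sum.swap)
  also have "\<dots> = (\<Sum>m<N. \<Sum>z\<in>UNIV. \<Sum>y\<in>UNIV. T m z y)" by (intro sum.cong refl sum.swap)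
  also have "\<dots> = (\<Sum>m<N. \<Sum>z\<in>UNIV. w m z * Bv (N - m) z)"
    unfolding T_def Bv_def by (simp add: sum_distrib_left)
  finally show ?thesis .
qed

lemma Phi_step:
  assumes N: "N \<ge> 1"
  shows "Phi (Suc N) = Phi N + (lam K Q f b \<beta> h - 1) * (\<Sum>z\<in>UNIV. w N z * v z)"
proof -
  have "Phi (Suc N) = (\<Sum>m<N. \<Sum>z\<in>UNIV. w m z * C (Suc N - m) z) + (\<Sum>z\<in>UNIV. w N z * C 1 z)"
    unfolding Phi_def by simp
  also have "(\<Sum>z\<in>UNIV. w N z * C 1 z) = lam K Q f b \<beta> h * (\<Sum>z\<in>UNIV. w N z * v z)"
    unfolding C_1 by (simp add: sum_distrib_left mult_ac)
  also have "Phi N = (\<Sum>m<N. \<Sum>z\<in>UNIV. w m z * Bv (N - m) z) + (\<Sum>m<N. \<Sum>z\<in>UNIV. w m z * C (Suc N - m) z)"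
  proof -
    have "Phi N = (\<Sum>m<N. \<Sum>z\<in>UNIV. w m z * Bv (N - m) z + w m z * C (Suc N - m) z)"
      unfolding Phi_def
    proof (intro sum.cong refl)
      fix m z assume "m \<in> {..<N}"
      then have m: "N - m \<ge> 1" "Suc (N - m) = Suc N - m" by auto
      show "w m z * C (N - m) z = w m z * Bv (N - m) z + w m z * C (Suc N - m) z"
        unfolding C_step[OF m(1)] m(2) by (simp add: algebra_simps)
    qed
    then show ?thesis by (simp add: sum.distrib)
  qed
  ultimately show ?thesis unfolding w_rec[OF N] by (simp add: algebra_simps)
qed

lemma Phi_1: "Phi 1 = lam K Q f b \<beta> h * muv"
  unfolding Phi_def muv_def by (simp add: C_Suc0 w_def Uv_0 sum_distrib_left mult_ac)

lemma Phi_formula: "N \<ge> 1 \<Longrightarrow> Phi N = muv + (lam K Q f b \<beta> h - 1) * (\<Sum>n<N. \<Sum>z\<in>UNIV. w n z * v z)"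
proof (induction N rule: dec_induct[where i=1, case_names base step])
  case base
  have "(\<Sum>n<1. \<Sum>z\<in>UNIV. w n z * v z) = muv" unfolding muv_def w_def by (simp add: Uv_0)
  then show ?case unfolding Phi_1 by (simp add: algebra_simps)
next
  case (step N)
  then show ?case using Phi_step[of N] by (simp add: algebra_simps)
qed

lemma Phi_ge: "Phi (Suc N) \<ge> lam K Q f b \<beta> h * (\<Sum>z\<in>UNIV. w N z * v z)"
proof -
  have "(\<lambda>m. \<Sum>z\<in>UNIV. w m z * C (Suc N - m) z) N \<le> (\<Sum>m<Suc N. \<Sum>z\<in>UNIV. w m z * C (Suc N - m) z)"
    by (rule member_le_sum) (auto intro!: sum_nonneg mult_nonneg_nonneg w_nonneg C_nonneg)
  then have "(\<Sum>z\<in>UNIV. w N z * C 1 z) \<le> Phi (Suc N)" unfolding Phi_def by simp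
  then show ?thesis unfolding C_1 by (simp add: sum_distrib_left mult_ac)
qed

lemma wv_bound:
  assumes r1: "lam K Q f b \<beta> h \<le> 1"
  shows "lam K Q f b \<beta> h * (\<Sum>z\<in>UNIV. w N z * v z) \<le> muv"
proof -
  have "(\<Sum>n<Suc N. \<Sum>z\<in>UNIV. w n z * v z) \<ge> 0"
    using vpos by (intro sum_nonneg mult_nonneg_nonneg w_nonneg) (auto intro: less_imp_le)
  then have "Phi (Suc N) \<le> muv" using Phi_formula[of "Suc N"] r1 by (simp add: mult_nonpos_nonneg)
  then show ?thesis using Phi_ge[of N] by simp
qed

end

context eigsetting begin

definition vmin :: real where "vmin = Min (range v)"

lemma vmin_pos: "vmin > 0"
proof -
  have "vmin \<in> range v" unfolding vmin_def by (rule Min_in) auto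
  then show ?thesis using vpos by auto
qed

lemma vmin_le: "vmin \<le> v x" unfolding vmin_def by (rule Min_le) auto

lemma muv_pos: "muv > 0"
proof -
  have "muv \<ge> (\<Sum>z\<in>UNIV. \<mu> z * vmin)" unfolding muv_def
    by (intro sum_mono mult_left_mono vmin_le mu_nonneg)
  also have "(\<Sum>z\<in>UNIV. \<mu> z * vmin) = vmin" by (simp add: sum_distrib_right[symmetric] mu_sum)
  finally show ?thesis using vmin_pos by simp
qed

lemma EZ_w: "EZ K Q \<mu> f N \<beta> h = exp (b * real N) * (\<Sum>z\<in>UNIV. w N z)"
  unfolding EZ_Uv w_def by (simp add: sum_distrib_left sum_distrib_right mult_ac exp_minus field_simps)

lemma sw_le: "(\<Sum>z\<in>UNIV. w N z) \<le> (\<Sum>z\<in>UNIV. w N z * v z) / vmin"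
proof -
  have "(\<Sum>z\<in>UNIV. w N z) * vmin \<le> (\<Sum>z\<in>UNIV. w N z * v z)"
    unfolding sum_distrib_right by (intro sum_mono mult_left_mono vmin_le w_nonneg)
  then show ?thesis using vmin_pos by (simp add: le_divide_eq)
qed

lemma EZ_upper:
  assumes r1: "lam K Q f b \<beta> h \<le> 1"
  shows "EZ K Q \<mu> f N \<beta> h \<le> exp (b * real N) * (muv / (lam K Q f b \<beta> h * vmin))"
proof -
  have r0: "lam K Q f b \<beta> h > 0" using lam_eig[of b \<beta> h] b0 by metis
  have "(\<Sum>z\<in>UNIV. w N z) \<le> (\<Sum>z\<in>UNIV. w N z * v z) / vmin" by (rule sw_le)
  also have "\<dots> \<le> (muv / lam K Q f b \<beta> h) / vmin"
    using wv_bound[OF r1, of N] r0 vmin_pos by (intro divide_right_mono) (auto simp: le_divide_eq mult.commute)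
  finally have "(\<Sum>z\<in>UNIV. w N z) \<le> muv / (lam K Q f b \<beta> h * vmin)" by simp
  then show ?thesis unfolding EZ_w by (rule mult_left_mono) simp
qed

end

context eigsetting begin

definition q :: real where "q = exp (- b)"
definition sw :: "nat \<Rightarrow> real" where "sw m = (\<Sum>z\<in>UNIV. w m z)"
definition S :: "nat \<Rightarrow> real" where "S N = (\<Sum>m<N. sw m * q ^ (N - m))"

lemma q_pow: "exp (- b * real t) = q ^ t"
  unfolding q_def by (simp add: exp_of_nat_mult[symmetric] mult.commute)

lemma Ehi_pos: "Ehi \<beta> h > 0"
  using Ehi_ge[where \<beta>=\<beta> and h=h and y=undefined] exp_gt_zero[of "\<beta> * f undefined + h"] by linarith

lemma Vs_pos: "Vs > 0" unfolding Vs_def using vpos by (intro sum_pos) auto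

lemma sw_nonneg: "sw m \<ge> 0" unfolding sw_def by (intro sum_nonneg w_nonneg)

lemma Bv_le2: assumes t: "t \<ge> 1" shows "Bv t z \<le> Ehi \<beta> h * Vs * q ^ t"
proof -
  have "Bv t z \<le> (\<Sum>y\<in>UNIV. Ehi \<beta> h * q ^ t * v y)"
    unfolding Bv_def
  proof (rule sum_mono)
    fix y
    have "K t * mpow Q t z y * exp (\<beta> * f y + h) \<le> 1 * 1 * Ehi \<beta> h"
      using K_le1[OF t] mpow_le1[OF Qst] mpow_nonneg[OF Qst] Ehi_ge[where \<beta>=\<beta> and h=h and y=y] Kpos[OF t]
      by (intro mult_mono) auto
    then have "K t * mpow Q t z y * exp (\<beta> * f y + h) * (exp (- b * real t) * v y) \<le> Ehi \<beta> h * (exp (- b * real t) * v y)"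
      using vpos[of y] by (intro mult_right_mono) auto
    then show "K t * mpow Q t z y * exp (\<beta> * f y + h) * exp (- b * real t) * v y \<le> Ehi \<beta> h * q ^ t * v y"
      unfolding q_pow by (simp add: mult_ac)
  qed
  also have "\<dots> = Ehi \<beta> h * Vs * q ^ t" unfolding Vs_def by (simp add: sum_distrib_left sum_distrib_right mult_ac)
  finally show ?thesis .
qed

lemma q_bounds: "b > 0 \<Longrightarrow> 0 < q \<and> q < 1" unfolding q_def by simp

definition Gc :: real where "Gc = Ehi \<beta> h * Vs / (1 - q)"

lemma Gc_pos: "b > 0 \<Longrightarrow> Gc > 0" unfolding Gc_def using q_bounds Ehi_pos Vs_pos by simp

lemma C_le:
  assumes bp: "b > 0" and k: "k \<ge> 1"
  shows "C k z \<le> Gc * q ^ k"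
proof -
  have q: "0 < q" "q < 1" using q_bounds[OF bp] by auto
  have sg: "summable (\<lambda>j. Ehi \<beta> h * Vs * q ^ k * q ^ j)"
    by (rule summable_mult) (rule summable_geometric, use q in simp)
  have "C k z = (\<Sum>j. Bv (k + j) z)" unfolding C_def ..
  also have "\<dots> \<le> (\<Sum>j. Ehi \<beta> h * Vs * q ^ k * q ^ j)"
  proof (rule suminf_le[OF _ Bv_summable[OF k] sg])
    fix j
    show "Bv (k + j) z \<le> Ehi \<beta> h * Vs * q ^ k * q ^ j"
      using Bv_le2[of "k + j" z] k by (simp add: power_add mult_ac)
  qed
  also have "\<dots> = Ehi \<beta> h * Vs * q ^ k * (\<Sum>j. q ^ j)"
    by (rule suminf_mult) (rule summable_geometric, use q in simp)
  also have "\<dots> = Gc * q ^ k" unfolding Gc_def using q by (simp add: suminf_geometric)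
  finally show ?thesis .
qed

lemma Phi_le: assumes bp: "b > 0" shows "Phi N \<le> Gc * S N"
proof -
  have "Phi N \<le> (\<Sum>m<N. \<Sum>z\<in>UNIV. w m z * (Gc * q ^ (N - m)))"
    unfolding Phi_def by (intro sum_mono mult_left_mono C_le bp w_nonneg) auto
  also have "\<dots> = Gc * S N" unfolding S_def sw_def by (simp add: sum_distrib_left sum_distrib_right mult_ac)
  finally show ?thesis .
qed

lemma S_rec: "S (Suc N) = q * (S N + sw N)"
proof -
  have "S (Suc N) = (\<Sum>m<N. sw m * q ^ (Suc N - m)) + sw N * q" unfolding S_def by simp
  also have "(\<Sum>m<N. sw m * q ^ (Suc N - m)) = q * S N"
    unfolding S_def sum_distrib_left
    by (intro sum.cong refl) (auto simp: Suc_diff_le)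
  finally show ?thesis by (simp add: algebra_simps)
qed

context
  assumes r1: "lam K Q f b \<beta> h = 1" and bp: "b > 0"
begin

definition W0 :: real where "W0 = muv / vmin"
definition Smax :: real where "Smax = q * W0 / (1 - q)"
definition a0 :: real where "a0 = muv / Gc"

lemma sw_W0: "sw m \<le> W0"
proof -
  have "sw m \<le> (\<Sum>z\<in>UNIV. w m z * v z) / vmin" unfolding sw_def by (rule sw_le)
  also have "\<dots> \<le> W0" unfolding W0_def using wv_bound[of m] r1 vmin_pos by (simp add: divide_right_mono)
  finally show ?thesis .
qed

lemma S_le: "S N \<le> Smax"
proof (induction N)
  case 0 then show ?case unfolding S_def Smax_def W0_def using q_bounds[OF bp] muv_pos vmin_pos by simp
next
  case (Suc N)
  have q: "0 < q" "q < 1" using q_bounds[OF bp] by auto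
  have "S (Suc N) = q * (S N + sw N)" by (rule S_rec)
  also have "\<dots> \<le> q * (Smax + W0)" using Suc sw_W0[of N] q by (intro mult_left_mono) auto
  also have "\<dots> = Smax" unfolding Smax_def using q by (simp add: field_simps)
  finally show ?case .
qed

lemma S_ge: "N \<ge> 1 \<Longrightarrow> S N \<ge> a0"
proof -
  assume N: "N \<ge> 1"
  have "Phi N = muv" using Phi_formula[OF N] r1 by simp
  then have "muv \<le> Gc * S N" using Phi_le[OF bp, of N] by simp
  then show ?thesis unfolding a0_def using Gc_pos[OF bp] by (simp add: divide_le_eq mult.commute)
qed

lemma window:
  assumes c: "c > 0" "c * q / (1 - q) \<le> a0 / 4" and T: "T \<ge> 1" "q ^ T * Smax \<le> a0 / 4"
  shows "\<exists>j<T. sw (M + j) \<ge> c"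
proof (rule ccontr)
  assume "\<not> ?thesis"
  then have small: "\<And>j. j < T \<Longrightarrow> sw (M + j) < c" by (meson not_le)
  have q: "0 < q" "q < 1" using q_bounds[OF bp] by auto
  have claim: "j \<le> T \<longrightarrow> S (M + j) \<le> q ^ j * Smax + c * q / (1 - q)" for j
  proof (induction j)
    case 0
    have "c * q / (1 - q) \<ge> 0" using c q by simp
    then show ?case using S_le[of M] by simp
  next
    case (Suc j)
    show ?case
    proof
      assume jT: "Suc j \<le> T"
      have "S (M + Suc j) = q * (S (M + j) + sw (M + j))" using S_rec[of "M + j"] by simp
      also have "\<dots> \<le> q * ((q ^ j * Smax + c * q / (1 - q)) + c)"
        using Suc jT small[of j] q by (intro mult_left_mono add_mono) auto
      also have "\<dots> = q ^ Suc j * Smax + c * q / (1 - q)" using q by (simp add: field_simps)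
      finally show "S (M + Suc j) \<le> q ^ Suc j * Smax + c * q / (1 - q)" .
    qed
  qed
  have "S (M + T) \<le> q ^ T * Smax + c * q / (1 - q)" using claim[of T] by simp
  then have "S (M + T) \<le> a0 / 2" using c(2) T(2) by linarith
  moreover have "S (M + T) \<ge> a0" using S_ge[of "M + T"] T(1) by simp
  moreover have "a0 > 0" unfolding a0_def using muv_pos Gc_pos[OF bp] by simp
  ultimately show False by simp
qed

lemma EZ_lower: "\<exists>c1>0. \<exists>T. \<forall>N\<ge>T. EZ K Q \<mu> f N \<beta> h \<ge> c1 * exp (b * real N)"
proof -
  have q: "0 < q" "q < 1" using q_bounds[OF bp] by auto
  have a0p: "a0 > 0" unfolding a0_def using muv_pos Gc_pos[OF bp] by simp
  define c where "c = a0 * (1 - q) / (4 * q)"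
  have c: "c > 0" "c * q / (1 - q) \<le> a0 / 4" unfolding c_def using q a0p by (auto simp: field_simps)
  have "(\<lambda>n. q ^ n * Smax) \<longlonglongrightarrow> 0 * Smax"
    by (intro tendsto_mult tendsto_const LIMSEQ_power_zero) (use q in simp)
  then have "eventually (\<lambda>n. q ^ n * Smax < a0 / 4) sequentially"
    using a0p by (intro order_tendstoD) auto
  then obtain T0 where T0: "\<And>n. n \<ge> T0 \<Longrightarrow> q ^ n * Smax < a0 / 4" unfolding eventually_sequentially by blast
  define T where "T = Suc T0"
  have T: "T \<ge> 1" "q ^ T * Smax \<le> a0 / 4" using T0[of T] unfolding T_def by auto
  define \<kappa> where "\<kappa> = Min (K ` {1..T})"
  have "\<kappa> \<in> K ` {1..T}" unfolding \<kappa>_def by (rule Min_in) (use T in auto)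
  then have \<kappa>0: "\<kappa> > 0" using Kpos by auto
  have \<kappa>le: "\<kappa> \<le> K k" if "k \<in> {1..T}" for k unfolding \<kappa>_def by (rule Min_le) (use that in auto)
  define c1 where "c1 = \<kappa> * Elo \<beta> h * c * exp (- b * real T)"
  have c1: "c1 > 0" unfolding c1_def using \<kappa>0 Elo_pos c by simp
  have "\<forall>N\<ge>T. EZ K Q \<mu> f N \<beta> h \<ge> c1 * exp (b * real N)"
  proof (intro allI impI)
    fix N assume NT: "N \<ge> T"
    obtain j where j: "j < T" "sw (N - T + j) \<ge> c" using window[OF c T, of "N - T"] by blast
    define m where "m = N - T + j"
    have mN: "m < N" "N - m \<in> {1..T}" "N - T \<le> m" unfolding m_def using j NT by auto
    have "EZ K Q \<mu> f m \<beta> h = exp (b * real m) * sw m" unfolding EZ_w sw_def ..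
    also have "\<dots> \<ge> exp (b * real m) * c" using j unfolding m_def by simp
    finally have Em: "EZ K Q \<mu> f m \<beta> h \<ge> exp (b * real m) * c" .
    have "exp (b * real N) * exp (- b * real T) \<le> exp (b * real m)"
    proof -
      have "N \<le> T + m" using mN(3) NT by arith
      then have "real N \<le> real T + real m" by linarith
      then have "b * real N \<le> b * (real T + real m)" by (rule mult_left_mono) (use bp in auto)
      then have "b * real N + - b * real T \<le> b * real m" by (simp add: algebra_simps)
      then show ?thesis by (simp add: exp_add[symmetric])
    qed
    then have "c1 * exp (b * real N) \<le> \<kappa> * Elo \<beta> h * (exp (b * real m) * c)"
      unfolding c1_def using \<kappa>0 Elo_pos[of \<beta> h] c by (simp add: mult_ac mult_left_mono)
    also have "\<dots> \<le> K (N - m) * Elo \<beta> h * EZ K Q \<mu> f m \<beta> h"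
      using \<kappa>le[OF mN(2)] Em \<kappa>0 Elo_pos[of \<beta> h] c
      by (intro mult_mono) (auto intro: less_imp_le)
    also have "\<dots> \<le> EZ K Q \<mu> f N \<beta> h" by (rule EZ_step[OF mN(1)])
    finally show "EZ K Q \<mu> f N \<beta> h \<ge> c1 * exp (b * real N)" .
  qed
  then show ?thesis using c1 by blast
qed

end
end

lemma sandwich_lin:
  fixes g :: "nat \<Rightarrow> real"
  assumes ev: "\<forall>N\<ge>Nst. l N \<le> g N \<and> g N \<le> u N"
    and "l \<longlonglongrightarrow> c" "u \<longlonglongrightarrow> c"
  shows "g \<longlonglongrightarrow> c"
proof (rule tendsto_sandwich[of l g sequentially u c])
  show "eventually (\<lambda>n. l n \<le> g n) sequentially" using ev unfolding eventually_sequentially by blast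
  show "eventually (\<lambda>n. g n \<le> u n) sequentially" using ev unfolding eventually_sequentially by blast
qed (use assms in auto)

lemma log_bounds_exp:
  fixes E :: "nat \<Rightarrow> real"
  assumes Epos: "\<And>N. E N > 0" and c1: "c1 > 0" and c2: "c2 > 0"
    and low: "\<forall>N\<ge>T. E N \<ge> c1 * exp (b * real N)"
    and up: "\<forall>N. E N \<le> exp (b * real N) * c2"
  shows "(\<lambda>N. ln (E N) / real N) \<longlonglongrightarrow> b"
proof (rule sandwich_lin[where Nst="max T 1" and l="\<lambda>N. b + ln c1 / real N" and u="\<lambda>N. b + ln c2 / real N"])
  show "(\<lambda>N. b + ln c1 / real N) \<longlonglongrightarrow> b" using tendsto_add[OF tendsto_const lim_const_over_n[of "ln c1"]] by simp
  show "(\<lambda>N. b + ln c2 / real N) \<longlonglongrightarrow> b" using tendsto_add[OF tendsto_const lim_const_over_n[of "ln c2"]] by simp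
  show "\<forall>N\<ge>max T 1. b + ln c1 / real N \<le> ln (E N) / real N \<and> ln (E N) / real N \<le> b + ln c2 / real N"
  proof (intro allI impI conjI)
    fix N assume N: "N \<ge> max T 1"
    then have Np: "real N > 0" by simp
    have "ln (c1 * exp (b * real N)) \<le> ln (E N)" using low N c1 Epos[of N] by (subst ln_le_cancel_iff) auto
    then have "ln c1 + b * real N \<le> ln (E N)" using c1 by (simp add: ln_mult)
    then have "(ln c1 + b * real N) / real N \<le> ln (E N) / real N" using Np by (intro divide_right_mono) auto
    moreover have "b + ln c1 / real N = (ln c1 + b * real N) / real N" using Np by (simp add: field_simps)
    ultimately show "b + ln c1 / real N \<le> ln (E N) / real N" by simp
    have "ln (E N) \<le> ln (exp (b * real N) * c2)" using up c2 Epos[of N] by (subst ln_le_cancel_iff) auto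
    then have "ln (E N) \<le> b * real N + ln c2" using c2 by (simp add: ln_mult)
    then have "ln (E N) / real N \<le> (b * real N + ln c2) / real N" using Np by (intro divide_right_mono) auto
    moreover have "b + ln c2 / real N = (b * real N + ln c2) / real N" using Np by (simp add: field_simps)
    ultimately show "ln (E N) / real N \<le> b + ln c2 / real N" by simp
  qed
qed

theorem mainTheorem1:
  fixes K L :: "nat \<Rightarrow> real" and \<alpha> :: real
    and Q :: "'x::finite \<Rightarrow> 'x \<Rightarrow> real" and \<mu>0 f :: "'x \<Rightarrow> real"
  assumes alpha: "\<alpha> \<ge> 0"
    and Lpos: "\<forall>n. L n > 0" and Lsv: "slowly_varying L"
    and Kdef: "\<forall>n\<ge>1. K n = L n * real n powr (-(1 + \<alpha>))"
    and Ksum: "(\<lambda>n. K (Suc n)) sums 1"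
    and Qst: "stochastic_matrix Q" and Qirr: "irreducible_matrix Q"
    and mu: "invariant_distribution Q \<mu>0"
    and fmean: "(\<Sum>x\<in>UNIV. \<mu>0 x * f x) = 0"
  shows "(\<forall>\<beta> h. \<beta> \<ge> 0 \<longrightarrow>
            (lam K Q f 0 \<beta> h > 1 \<longrightarrow> (\<exists>!b. b > 0 \<and> lam K Q f b \<beta> h = 1)) \<and>
            ((\<lambda>N. ln (EZ K Q \<mu>0 f N \<beta> h) / real N) \<longlonglongrightarrow> Fa K Q f \<beta> h) \<and>
            Fa K Q f \<beta> h \<ge> 0)
       \<and> (\<forall>\<beta>. \<beta> \<ge> 0 \<longrightarrow> Sup {h. Fa K Q f \<beta> h = 0} = - ln (lam K Q f 0 \<beta> 0))"
proof -
  have Kpos: "\<And>n. n \<ge> 1 \<Longrightarrow> K n > 0" using Kdef Lpos by simp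
  interpret setting K Q \<mu>0 f
    by unfold_locales (use Kpos Ksum Qst Qirr mu in auto)
  obtain a where a: "a > 0" "\<forall>n\<ge>1. L n \<ge> a / real n" using L_lower[OF Lpos Lsv] by blast
  have part1: "(lam K Q f 0 \<beta> h > 1 \<longrightarrow> (\<exists>!b. b > 0 \<and> lam K Q f b \<beta> h = 1)) \<and>
            ((\<lambda>N. ln (EZ K Q \<mu>0 f N \<beta> h) / real N) \<longlonglongrightarrow> Fa K Q f \<beta> h) \<and>
            Fa K Q f \<beta> h \<ge> 0" for \<beta> h
  proof (cases "lam K Q f 0 \<beta> h > 1")
    case True
    define b where "b = Fa K Q f \<beta> h"
    have bp: "b > 0" and lb: "lam K Q f b \<beta> h = 1" using Fa_pos[OF True] unfolding b_def by auto
    obtain v where v: "\<And>x. v x > 0" "\<And>x. (\<Sum>y\<in>UNIV. Amat K Q f b \<beta> h x y * v y) = lam K Q f b \<beta> h * v x"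
    proof -
      have b0: "b \<ge> 0" using bp by simp
      show ?thesis using lam_eig[OF b0, of \<beta> h] that by blast
    qed
    interpret E: eigsetting K Q \<mu>0 f \<beta> h b v
      by unfold_locales (use bp v in auto)
    obtain c1 T where c1: "c1 > 0" "\<forall>N\<ge>T. EZ K Q \<mu>0 f N \<beta> h \<ge> c1 * exp (b * real N)"
      using E.EZ_lower[OF lb bp] by blast
    have c2: "E.muv / (lam K Q f b \<beta> h * E.vmin) > 0" using E.muv_pos E.vmin_pos lb by simp
    have "(\<lambda>N. ln (EZ K Q \<mu>0 f N \<beta> h) / real N) \<longlonglongrightarrow> b"
      by (rule log_bounds_exp[OF EZ_pos c1(1) c2 c1(2)]) (use E.EZ_upper lb in auto)
    then show ?thesis using root_exists[OF True] bp unfolding b_def by auto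
  next
    case False
    then have F0: "Fa K Q f \<beta> h = 0" unfolding Fa_def by simp
    obtain v where v: "\<And>x. v x > 0" "\<And>x. (\<Sum>y\<in>UNIV. Amat K Q f 0 \<beta> h x y * v y) = lam K Q f 0 \<beta> h * v x"
      "lam K Q f 0 \<beta> h > 0"
      using lam_eig[OF order_refl, of \<beta> h] by blast
    interpret E: eigsetting K Q \<mu>0 f \<beta> h 0 v
      by unfold_locales (use v in auto)
    define c2 where "c2 = E.muv / (lam K Q f 0 \<beta> h * E.vmin)"
    have c2p: "c2 > 0" unfolding c2_def using E.muv_pos E.vmin_pos v(3) by simp
    have up: "EZ K Q \<mu>0 f N \<beta> h \<le> c2" for N
      using E.EZ_upper[of N] False unfolding c2_def by simp
    define c0 where "c0 = Elo \<beta> h * a"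
    have c0p: "c0 > 0" unfolding c0_def using Elo_pos a by simp
    have low: "ln c0 - (2 + \<alpha>) * ln (real N) \<le> ln (EZ K Q \<mu>0 f N \<beta> h)" if N: "N \<ge> 1" for N
    proof -
      have Np: "real N > 0" using N by simp
      have "a / real N \<le> L N" using a(2) N by simp
      then have "a / real N * real N powr (-(1 + \<alpha>)) \<le> L N * real N powr (-(1 + \<alpha>))"
        by (rule mult_right_mono) simp
      also have "\<dots> = K N" using Kdef N by simp
      finally have "K N \<ge> a / real N * real N powr (-(1 + \<alpha>))" .
      also have "a / real N * real N powr (-(1 + \<alpha>)) = a * real N powr (-(2 + \<alpha>))"
      proof -
        have e1: "-(2 + \<alpha>) = (-(1 + \<alpha>)) - 1" by simp
        have "real N powr (-(2 + \<alpha>)) = real N powr (-(1 + \<alpha>)) / real N powr 1"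
          unfolding e1 by (rule powr_diff)
        also have "real N powr 1 = real N" using Np by simp
        finally show ?thesis by simp
      qed
      finally have "c0 * real N powr (-(2 + \<alpha>)) \<le> K N * Elo \<beta> h"
        unfolding c0_def using Elo_pos[of \<beta> h] by (simp add: mult_ac mult_right_mono)
      also have "\<dots> \<le> EZ K Q \<mu>0 f N \<beta> h" by (rule EZ_lowK[OF N])
      finally have "ln (c0 * real N powr (-(2 + \<alpha>))) \<le> ln (EZ K Q \<mu>0 f N \<beta> h)"
        using c0p Np EZ_pos[of N \<beta> h] by (subst ln_le_cancel_iff) auto
      then show ?thesis using c0p Np by (simp add: ln_mult algebra_simps)
    qed
    have lim: "(\<lambda>N. ln (EZ K Q \<mu>0 f N \<beta> h) / real N) \<longlonglongrightarrow> 0"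
    proof (rule sandwich_lin[where Nst=1 and l="\<lambda>N. ln c0 / real N - (2 + \<alpha>) * (ln (real N) / real N)"
          and u="\<lambda>N. ln c2 / real N"])
      show "(\<lambda>N. ln c0 / real N - (2 + \<alpha>) * (ln (real N) / real N)) \<longlonglongrightarrow> 0"
        using tendsto_diff[OF lim_const_over_n[of "ln c0"] tendsto_mult[OF tendsto_const[of "2 + \<alpha>"] lim_ln_over_n]] by simp
      show "(\<lambda>N. ln c2 / real N) \<longlonglongrightarrow> 0" by (rule lim_const_over_n)
      show "\<forall>N\<ge>1. ln c0 / real N - (2 + \<alpha>) * (ln (real N) / real N) \<le> ln (EZ K Q \<mu>0 f N \<beta> h) / real N \<and>
            ln (EZ K Q \<mu>0 f N \<beta> h) / real N \<le> ln c2 / real N"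
      proof (intro allI impI conjI)
        fix N :: nat assume N: "N \<ge> 1"
        then have Np: "real N > 0" by simp
        have "ln c0 - (2 + \<alpha>) * ln (real N) \<le> ln (EZ K Q \<mu>0 f N \<beta> h)" by (rule low[OF N])
        then have "(ln c0 - (2 + \<alpha>) * ln (real N)) / real N \<le> ln (EZ K Q \<mu>0 f N \<beta> h) / real N"
          using Np by (intro divide_right_mono) auto
        moreover have "ln c0 / real N - (2 + \<alpha>) * (ln (real N) / real N) = (ln c0 - (2 + \<alpha>) * ln (real N)) / real N"
          by (simp add: diff_divide_distrib)
        ultimately show "ln c0 / real N - (2 + \<alpha>) * (ln (real N) / real N) \<le> ln (EZ K Q \<mu>0 f N \<beta> h) / real N"
          by simp
        have "ln (EZ K Q \<mu>0 f N \<beta> h) \<le> ln c2" using up[of N] EZ_pos[of N \<beta> h] c2p by (subst ln_le_cancel_iff) auto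
        then show "ln (EZ K Q \<mu>0 f N \<beta> h) / real N \<le> ln c2 / real N" using Np by (simp add: divide_right_mono)
      qed
    qed
    show ?thesis using False lim F0 by simp
  qed
  show ?thesis using part1 Sup_claim by blast
qed

end
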